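(* Let $\Gamma\subset\mathbf{C}^4$ (coordinates $(z=(z_1,z_2),\zeta,w=u+iv)$) be given by $$v=\langle z,\bar z\rangle+F_3(z,\bar z,\zeta,\bar\zeta)+F_4(z,\bar z,\zeta,\bar\zeta)+\dots,$$ where $F_j$ is a real homogeneous polynomial of degree $j$, $\langle z,\bar z\rangle$ is a nondegenerate Hermitian form, and $$F_3=2\mathrm{Re}\big(K(z,z)\bar\zeta+A_1(z)|\zeta|^2+A_2\zeta^2\bar\zeta\big),$$ $$F_4=2\mathrm{Re}\big((P(z,z,\bar z)+Q(z,z,z))\bar\zeta+R(z,z)\bar\zeta^2\big)+S(z,\bar z)|\zeta|^2+T(z,z,\bar z,\bar z)+2\mathrm{Re}\big(B_1(z,z)|\zeta|^2+B_2(z)\zeta^2\bar\zeta+B_3(z)\zeta\bar\zeta^2\big),$$ with $K\not\equiv 0$, and assume the pair $(\langle z,\bar z\rangle,K)$ is one of the nine normal forms (1)–(9) listed below. If the Levi form of $\Gamma$ is identically degenerate (equivalently, the determinant of the complex Hessian of the right-hand side with respect to $(z_1,z_2,\zeta)$ vanishes identically), then $A_1=A_2=B_1=B_2=B_3=0$ and, according to the number of the pair, (1) $S=4(k^2|z_1|^2+m^2|z_2|^2)$; (2) $S=4k^2(|z_1|^2+|z_2|^2)$; (3) $S=4k^2|z_1|^2$; (4) $S=4(k^2|z_1|^2-m^2|z_2|^2)$; (5) $S=4k^2(|z_1|^2-|z_2|^2)$; (6) $S=4k^2|z_1|^2$; (7) $S=4(\bar m z_1\bar z_2+mz_2\bar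 z_1)$; (8) $S=4m(z_1\bar z_2+z_2\bar z_1)$; (9) $S=0$.
   Context: Here $A_1$ is a complex linear form in $z$, $A_2$ a complex constant, $K,R,B_1$ holomorphic quadratic forms in $z$, $B_2,B_3$ linear forms, $P(z,z,\bar z)$ of bidegree $(2,1)$, $Q$ a holomorphic cubic form, $S$ a Hermitian form, $T$ of bidegree $(2,2)$. The nine normal forms of the pair $(\langle z,\bar z\rangle,K(z,z))$ are: (1) $(|z_1|^2+|z_2|^2,kz_1^2+mz_2^2)$, $k,m>0,k\ne m$; (2) $(|z_1|^2+|z_2|^2,k(z_1^2+z_2^2))$, $k>0$; (3) $(|z_1|^2+|z_2|^2,kz_1^2)$, $k>0$; (4) $(|z_1|^2-|z_2|^2,kz_1^2+mz_2^2)$, $k,m>0,k\ne m$; (5) $(|z_1|^2-|z_2|^2,k(z_1^2+z_2^2))$, $k>0$; (6) $(|z_1|^2-|z_2|^2,kz_1^2)$, $k>0$; (7) $(2\mathrm{Re}(z_1\bar z_2),z_1^2+mz_2^2)$, $m\notin\mathbf{R}$; (8) $(2\mathrm{Re}(z_1\bar z_2),z_1^2+mz_2^2)$, $m\in\mathbf{R}\setminus\{0\}$; (9) $(2\mathrm{Re}(z_1\bar z_2),z_1^2)$. *)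

theory Defs
  imports "HOL-Analysis.Analysis"
begin

text \<open>Points of C^3 with coordinates (z1, z2, zeta).\<close>
type_synonym pt = "complex \<times> complex \<times> complex"

definition Dd :: "pt \<Rightarrow> (pt \<Rightarrow> complex) \<Rightarrow> pt \<Rightarrow> complex" where
  "Dd v g = (\<lambda>p. vector_derivative (\<lambda>t::real. g (p + t *\<^sub>R v)) (at 0))"

definition C_inf_on :: "pt set \<Rightarrow> (pt \<Rightarrow> complex) \<Rightarrow> bool" where
  "C_inf_on U g \<longleftrightarrow>
     (\<forall>vs. continuous_on U (foldr Dd vs g) \<and>
        (\<forall>v. \<forall>p\<in>U. (\<lambda>t::real. foldr Dd vs g (p + t *\<^sub>R v)) differentiable (at 0)))"

text \<open>Coordinate unit vectors e_j and i*e_j (j = 0,1,2 for z1, z2, zeta).\<close>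
definition ev :: "nat \<Rightarrow> complex \<Rightarrow> pt" where
  "ev j c = (if j = 0 then (c, 0, 0) else if j = 1 then (0, c, 0) else (0, 0, c))"

definition dZ :: "nat \<Rightarrow> (pt \<Rightarrow> complex) \<Rightarrow> pt \<Rightarrow> complex" where
  "dZ j g = (\<lambda>p. (Dd (ev j 1) g p - \<i> * Dd (ev j \<i>) g p) / 2)"

definition dZb :: "nat \<Rightarrow> (pt \<Rightarrow> complex) \<Rightarrow> pt \<Rightarrow> complex" where
  "dZb j g = (\<lambda>p. (Dd (ev j 1) g p + \<i> * Dd (ev j \<i>) g p) / 2)"

definition cHess :: "(pt \<Rightarrow> real) \<Rightarrow> pt \<Rightarrow> nat \<Rightarrow> nat \<Rightarrow> complex" where
  "cHess f p j k = dZ j (dZb k (\<lambda>q. complex_of_real (f q))) p"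

definition det3 :: "(nat \<Rightarrow> nat \<Rightarrow> complex) \<Rightarrow> complex" where
  "det3 H = H 0 0 * (H 1 1 * H 2 2 - H 1 2 * H 2 1)
          - H 0 1 * (H 1 0 * H 2 2 - H 1 2 * H 2 0)
          + H 0 2 * (H 1 0 * H 2 1 - H 1 1 * H 2 0)"

definition levi_det :: "(pt \<Rightarrow> real) \<Rightarrow> pt \<Rightarrow> complex" where
  "levi_det f p = det3 (cHess f p)"

definition zv :: "complex \<Rightarrow> complex \<Rightarrow> nat \<Rightarrow> complex" where
  "zv z1 z2 i = (if i = 0 then z1 else z2)"

definition is_linear_form :: "(complex \<Rightarrow> complex \<Rightarrow> complex) \<Rightarrow> bool" where
  "is_linear_form A \<longleftrightarrow> (\<exists>a b. \<forall>z1 z2. A z1 z2 = a * z1 + b * z2)"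

definition is_quadratic_form :: "(complex \<Rightarrow> complex \<Rightarrow> complex) \<Rightarrow> bool" where
  "is_quadratic_form Q \<longleftrightarrow> (\<exists>a b c. \<forall>z1 z2. Q z1 z2 = a * z1^2 + b * z1 * z2 + c * z2^2)"

definition is_cubic_form :: "(complex \<Rightarrow> complex \<Rightarrow> complex) \<Rightarrow> bool" where
  "is_cubic_form Q \<longleftrightarrow> (\<exists>a b c d. \<forall>z1 z2.
      Q z1 z2 = a * z1^3 + b * z1^2 * z2 + c * z1 * z2^2 + d * z2^3)"

definition is_bideg21 :: "(complex \<Rightarrow> complex \<Rightarrow> complex) \<Rightarrow> bool" where
  "is_bideg21 P \<longleftrightarrow> (\<exists>c :: nat \<Rightarrow> nat \<Rightarrow> nat \<Rightarrow> complex. \<forall>z1 z2.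
      P z1 z2 = (\<Sum>i<2. \<Sum>j<2. \<Sum>l<2. c i j l * zv z1 z2 i * zv z1 z2 j * cnj (zv z1 z2 l)))"

definition is_bideg22 :: "(complex \<Rightarrow> complex \<Rightarrow> complex) \<Rightarrow> bool" where
  "is_bideg22 T \<longleftrightarrow> (\<exists>c :: nat \<Rightarrow> nat \<Rightarrow> nat \<Rightarrow> nat \<Rightarrow> complex. \<forall>z1 z2.
      T z1 z2 = (\<Sum>i<2. \<Sum>j<2. \<Sum>l<2. \<Sum>r<2.
                   c i j l r * zv z1 z2 i * zv z1 z2 j * cnj (zv z1 z2 l) * cnj (zv z1 z2 r)))"

definition is_hermitian_form :: "(complex \<Rightarrow> complex \<Rightarrow> complex) \<Rightarrow> bool" where
  "is_hermitian_form S \<longleftrightarrow> (\<exists>c :: nat \<Rightarrow> nat \<Rightarrow> complex. (\<forall>i j. c j i = cnj (c i j)) \<and>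
      (\<forall>z1 z2. S z1 z2 = (\<Sum>i<2. \<Sum>j<2. c i j * zv z1 z2 i * cnj (zv z1 z2 j))))"

definition nf_herm :: "nat \<Rightarrow> complex \<Rightarrow> complex \<Rightarrow> real" where
  "nf_herm n z1 z2 =
     (if n \<in> {1,2,3} then (cmod z1)^2 + (cmod z2)^2
      else if n \<in> {4,5,6} then (cmod z1)^2 - (cmod z2)^2
      else 2 * Re (z1 * cnj z2))"

definition nf_K :: "nat \<Rightarrow> real \<Rightarrow> complex \<Rightarrow> complex \<Rightarrow> complex \<Rightarrow> complex" where
  "nf_K n k m z1 z2 =
     (if n \<in> {1,4} then of_real k * z1^2 + m * z2^2
      else if n \<in> {2,5} then of_real k * (z1^2 + z2^2)
      else if n \<in> {3,6} then of_real k * z1^2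
      else if n \<in> {7,8} then z1^2 + m * z2^2
      else z1^2)"

definition nf_params :: "nat \<Rightarrow> real \<Rightarrow> complex \<Rightarrow> bool" where
  "nf_params n k m =
     (if n \<in> {1,4} then k > 0 \<and> m \<in> \<real> \<and> Re m > 0 \<and> of_real k \<noteq> m
      else if n \<in> {2,3,5,6} then k > 0
      else if n = 7 then m \<notin> \<real>
      else if n = 8 then m \<in> \<real> \<and> m \<noteq> 0
      else n = 9)"

definition nf_S :: "nat \<Rightarrow> real \<Rightarrow> complex \<Rightarrow> complex \<Rightarrow> complex \<Rightarrow> complex" where
  "nf_S n k m z1 z2 =
     (if n = 1 then 4 * (of_real (k^2) * of_real ((cmod z1)^2) + m^2 * of_real ((cmod z2)^2))
      else if n = 2 then 4 * of_real (k^2) * of_real ((cmod z1)^2 + (cmod z2)^2)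
      else if n = 3 then 4 * of_real (k^2) * of_real ((cmod z1)^2)
      else if n = 4 then 4 * (of_real (k^2) * of_real ((cmod z1)^2) - m^2 * of_real ((cmod z2)^2))
      else if n = 5 then 4 * of_real (k^2) * of_real ((cmod z1)^2 - (cmod z2)^2)
      else if n = 6 then 4 * of_real (k^2) * of_real ((cmod z1)^2)
      else if n = 7 then 4 * (cnj m * z1 * cnj z2 + m * z2 * cnj z1)
      else if n = 8 then 4 * m * (z1 * cnj z2 + z2 * cnj z1)
      else 0)"

end

theory Submission
  imports Defs
begin

definition LD :: "(pt \<Rightarrow> complex) \<Rightarrow> pt \<Rightarrow> pt \<Rightarrow> bool" where
  "LD g q v \<longleftrightarrow> (\<lambda>t::real. g (q + t *\<^sub>R v)) differentiable (at 0)"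

lemma LD_I: "((\<lambda>t::real. g (q + t *\<^sub>R v)) has_vector_derivative D) (at 0) \<Longrightarrow> LD g q v"
  unfolding LD_def using vector_derivative_works vector_derivative_at by metis

lemma Dd_works: "LD g q v \<Longrightarrow> ((\<lambda>t::real. g (q + t *\<^sub>R v)) has_vector_derivative Dd v g q) (at 0)"
  unfolding LD_def Dd_def using vector_derivative_works by blast

lemma Dd_eqI: "((\<lambda>t::real. g (q + t *\<^sub>R v)) has_vector_derivative D) (at 0) \<Longrightarrow> Dd v g q = D"
  unfolding Dd_def by (rule vector_derivative_at)

lemma LD_add: "LD f q v \<Longrightarrow> LD g q v \<Longrightarrow> LD (\<lambda>p. f p + g p) q v"
  by (rule LD_I, rule has_vector_derivative_add, (erule Dd_works)+)
lemma Dd_add_at: "LD f q v \<Longrightarrow> LD g q v \<Longrightarrow> Dd v (\<lambda>p. f p + g p) q = Dd v f q + Dd v g q"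
  by (rule Dd_eqI, rule has_vector_derivative_add, (erule Dd_works)+)
lemma LD_diff: "LD f q v \<Longrightarrow> LD g q v \<Longrightarrow> LD (\<lambda>p. f p - g p) q v"
  by (rule LD_I, rule has_vector_derivative_diff, (erule Dd_works)+)
lemma Dd_diff_at: "LD f q v \<Longrightarrow> LD g q v \<Longrightarrow> Dd v (\<lambda>p. f p - g p) q = Dd v f q - Dd v g q"
  by (rule Dd_eqI, rule has_vector_derivative_diff, (erule Dd_works)+)
lemma LD_cmul: "LD f q v \<Longrightarrow> LD (\<lambda>p. c * f p) q v"
  by (rule LD_I, rule has_vector_derivative_mult_right, erule Dd_works)
lemma Dd_cmul_at: "LD f q v \<Longrightarrow> Dd v (\<lambda>p. c * f p) q = c * Dd v f q"
  by (rule Dd_eqI, rule has_vector_derivative_mult_right, erule Dd_works)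
lemma LD_div: "LD f q v \<Longrightarrow> LD (\<lambda>p. f p / c) q v"
  by (rule LD_I, rule has_vector_derivative_divide, erule Dd_works)
lemma Dd_div_at: "LD f q v \<Longrightarrow> Dd v (\<lambda>p. f p / c) q = Dd v f q / c"
  by (rule Dd_eqI, rule has_vector_derivative_divide, erule Dd_works)

lemma Dd_local:
  assumes "open V" "q \<in> V" "\<And>p. p \<in> V \<Longrightarrow> f p = g p"
  shows "Dd v f q = Dd v g q"
proof -
  have "open ((\<lambda>t::real. q + t *\<^sub>R v) -` V)"
    by (rule open_vimage[OF assms(1)]) (intro continuous_intros)
  moreover have "0 \<in> (\<lambda>t::real. q + t *\<^sub>R v) -` V" using assms(2) by simp
  ultimately obtain e where e: "e > 0" "ball 0 e \<subseteq> (\<lambda>t::real. q + t *\<^sub>R v) -` V"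
    by (meson open_contains_ball)
  have "\<forall>\<^sub>F t in nhds 0. f (q + t *\<^sub>R v) = g (q + t *\<^sub>R v)"
    unfolding eventually_nhds_metric using e assms(3) by (intro exI[of _ e]) (auto simp: dist_norm subset_iff)
  then show ?thesis unfolding Dd_def by (intro vector_derivative_cong_eq) auto
qed

lemma Hess_formula:
  assumes "LD (Dd (ev k 1) g) q (ev j 1)" "LD (Dd (ev k 1) g) q (ev j \<i>)"
    "LD (Dd (ev k \<i>) g) q (ev j 1)" "LD (Dd (ev k \<i>) g) q (ev j \<i>)"
  shows "dZ j (dZb k g) q = (Dd (ev j 1) (Dd (ev k 1) g) q + \<i> * Dd (ev j 1) (Dd (ev k \<i>) g) q
      - \<i> * Dd (ev j \<i>) (Dd (ev k 1) g) q + Dd (ev j \<i>) (Dd (ev k \<i>) g) q) / 4"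
proof -
  have e: "\<And>v. LD (Dd (ev k 1) g) q v \<Longrightarrow> LD (Dd (ev k \<i>) g) q v \<Longrightarrow>
     Dd v (dZb k g) q = (Dd v (Dd (ev k 1) g) q + \<i> * Dd v (Dd (ev k \<i>) g) q) / 2"
  proof -
    fix v assume a: "LD (Dd (ev k 1) g) q v" "LD (Dd (ev k \<i>) g) q v"
    have "Dd v (dZb k g) q = Dd v (\<lambda>p. Dd (ev k 1) g p + \<i> * Dd (ev k \<i>) g p) q / 2"
      unfolding dZb_def by (rule Dd_div_at, intro LD_add LD_cmul a)
    also have "\<dots> = (Dd v (Dd (ev k 1) g) q + Dd v (\<lambda>p. \<i> * Dd (ev k \<i>) g p) q) / 2"
      by (subst Dd_add_at, intro LD_cmul a, intro LD_cmul a, rule refl)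
    also have "\<dots> = (Dd v (Dd (ev k 1) g) q + \<i> * Dd v (Dd (ev k \<i>) g) q) / 2"
      by (subst Dd_cmul_at[OF a(2)]) (rule refl)
    finally show "Dd v (dZb k g) q = (Dd v (Dd (ev k 1) g) q + \<i> * Dd v (Dd (ev k \<i>) g) q) / 2" .
  qed
  show ?thesis unfolding dZ_def e[OF assms(1,3)] e[OF assms(2,4)]
    by (simp add: field_simps)
qed

inductive pf :: "(pt \<Rightarrow> complex) \<Rightarrow> bool" where
  pf_const: "pf (\<lambda>q. c)"
| pf_x: "pf fst"
| pf_y: "pf (\<lambda>q. fst (snd q))"
| pf_w: "pf (\<lambda>q. snd (snd q))"
| pf_add: "pf f \<Longrightarrow> pf g \<Longrightarrow> pf (\<lambda>q. f q + g q)"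
| pf_diff: "pf f \<Longrightarrow> pf g \<Longrightarrow> pf (\<lambda>q. f q - g q)"
| pf_mult: "pf f \<Longrightarrow> pf g \<Longrightarrow> pf (\<lambda>q. f q * g q)"
| pf_cnj: "pf f \<Longrightarrow> pf (\<lambda>q. cnj (f q))"
| pf_div: "pf f \<Longrightarrow> pf (\<lambda>q. f q / c)"

lemma lin_deriv: "((\<lambda>t::real. a + t *\<^sub>R b) has_vector_derivative b) (at x)"
  by (rule has_vector_derivative_add[of "\<lambda>t. a" 0 _ "\<lambda>t. t *\<^sub>R b" b, simplified])
     (auto intro!: derivative_eq_intros simp: has_vector_derivative_def)

lemma pf_main: "pf f \<Longrightarrow> \<exists>f'. pf f' \<and> (\<forall>q. ((\<lambda>t::real. f (q + t *\<^sub>R v)) has_vector_derivative f' q) (at 0))"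
proof (induction rule: pf.induct)
  case (pf_const c) then show ?case by (intro exI[of _ "\<lambda>q. 0"]) (auto intro: pf.intros)
next
  case pf_x then show ?case
    by (intro exI[of _ "\<lambda>q. fst v"]) (auto intro: pf.intros simp: lin_deriv)
next
  case pf_y then show ?case
    by (intro exI[of _ "\<lambda>q. fst (snd v)"]) (auto intro: pf.intros simp: lin_deriv)
next
  case pf_w then show ?case
    by (intro exI[of _ "\<lambda>q. snd (snd v)"]) (auto intro: pf.intros simp: lin_deriv)
next
  case (pf_add f g)
  then obtain f' g' where "pf f'" "pf g'" "\<forall>q. ((\<lambda>t::real. f (q + t *\<^sub>R v)) has_vector_derivative f' q) (at 0)"
    "\<forall>q. ((\<lambda>t::real. g (q + t *\<^sub>R v)) has_vector_derivative g' q) (at 0)" by blast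
  then show ?case by (intro exI[of _ "\<lambda>q. f' q + g' q"]) (auto intro: pf.intros has_vector_derivative_add)
next
  case (pf_diff f g)
  then obtain f' g' where "pf f'" "pf g'" "\<forall>q. ((\<lambda>t::real. f (q + t *\<^sub>R v)) has_vector_derivative f' q) (at 0)"
    "\<forall>q. ((\<lambda>t::real. g (q + t *\<^sub>R v)) has_vector_derivative g' q) (at 0)" by blast
  then show ?case by (intro exI[of _ "\<lambda>q. f' q - g' q"]) (auto intro: pf.intros has_vector_derivative_diff)
next
  case (pf_mult f g)
  then obtain f' g' where "pf f'" "pf g'" "\<forall>q. ((\<lambda>t::real. f (q + t *\<^sub>R v)) has_vector_derivative f' q) (at 0)"
    "\<forall>q. ((\<lambda>t::real. g (q + t *\<^sub>R v)) has_vector_derivative g' q) (at 0)" by blast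
  then show ?case
  proof (intro exI[of _ "\<lambda>q. f q * g' q + f' q * g q"] conjI allI)
    show "pf (\<lambda>q. f q * g' q + f' q * g q)" using pf_mult.hyps \<open>pf f'\<close> \<open>pf g'\<close> by (intro pf.intros)
    fix q
    from has_vector_derivative_mult[OF \<open>\<forall>q. ((\<lambda>t::real. f (q + t *\<^sub>R v)) has_vector_derivative f' q) (at 0)\<close>[rule_format, of q]
       \<open>\<forall>q. ((\<lambda>t::real. g (q + t *\<^sub>R v)) has_vector_derivative g' q) (at 0)\<close>[rule_format, of q]]
    show "((\<lambda>t::real. f (q + t *\<^sub>R v) * g (q + t *\<^sub>R v)) has_vector_derivative f q * g' q + f' q * g q) (at 0)"
      by simp
  qed
next
  case (pf_cnj f)
  then obtain f' where "pf f'" "\<forall>q. ((\<lambda>t::real. f (q + t *\<^sub>R v)) has_vector_derivative f' q) (at 0)" by blast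
  then show ?case by (intro exI[of _ "\<lambda>q. cnj (f' q)"]) (auto intro: pf.intros has_vector_derivative_cnj)
next
  case (pf_div f c)
  then obtain f' where "pf f'" "\<forall>q. ((\<lambda>t::real. f (q + t *\<^sub>R v)) has_vector_derivative f' q) (at 0)" by blast
  then show ?case by (intro exI[of _ "\<lambda>q. f' q / c"]) (auto intro: pf.intros has_vector_derivative_divide)
qed

lemma pf_LD: "pf f \<Longrightarrow> LD f q v"
  using pf_main[of f v] LD_I by blast

lemma pf_Dd: "pf f \<Longrightarrow> pf (Dd v f)"
proof -
  assume "pf f"
  then obtain f' where "pf f'" "\<forall>q. ((\<lambda>t::real. f (q + t *\<^sub>R v)) has_vector_derivative f' q) (at 0)"
    using pf_main by blast
  moreover then have "Dd v f = f'" using Dd_eqI by blast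
  ultimately show ?thesis by simp
qed

lemma Dd_const[simp]: "Dd v (\<lambda>q. c) = (\<lambda>q. 0)"
  by (rule ext, rule Dd_eqI) simp
lemma Dd_x[simp]: "Dd v fst = (\<lambda>q. fst v)"
  by (rule ext, rule Dd_eqI) (simp add: lin_deriv)
lemma Dd_y[simp]: "Dd v (\<lambda>q. fst (snd q)) = (\<lambda>q. fst (snd v))"
  by (rule ext, rule Dd_eqI) (simp add: lin_deriv)
lemma Dd_w[simp]: "Dd v (\<lambda>q. snd (snd q)) = (\<lambda>q. snd (snd v))"
  by (rule ext, rule Dd_eqI) (simp add: lin_deriv)
lemma Dd_add[simp]: "pf f \<Longrightarrow> pf g \<Longrightarrow> Dd v (\<lambda>q. f q + g q) = (\<lambda>q. Dd v f q + Dd v g q)"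
  by (rule ext, rule Dd_add_at; rule pf_LD)
lemma Dd_diff[simp]: "pf f \<Longrightarrow> pf g \<Longrightarrow> Dd v (\<lambda>q. f q - g q) = (\<lambda>q. Dd v f q - Dd v g q)"
  by (rule ext, rule Dd_diff_at; rule pf_LD)
lemma Dd_mult[simp]: "pf f \<Longrightarrow> pf g \<Longrightarrow> Dd v (\<lambda>q. f q * g q) = (\<lambda>q. f q * Dd v g q + Dd v f q * g q)"
proof (rule ext, rule Dd_eqI)
  fix q assume "pf f" "pf g"
  from has_vector_derivative_mult[OF Dd_works[OF pf_LD[OF this(1)]] Dd_works[OF pf_LD[OF this(2)]]]
  show "((\<lambda>t::real. f (q + t *\<^sub>R v) * g (q + t *\<^sub>R v)) has_vector_derivative f q * Dd v g q + Dd v f q * g q) (at 0)"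
    by simp
qed
lemma Dd_cnj[simp]: "pf f \<Longrightarrow> Dd v (\<lambda>q. cnj (f q)) = (\<lambda>q. cnj (Dd v f q))"
  by (rule ext, rule Dd_eqI, rule has_vector_derivative_cnj, rule Dd_works, rule pf_LD)
lemma Dd_divc[simp]: "pf f \<Longrightarrow> Dd v (\<lambda>q. f q / c) = (\<lambda>q. Dd v f q / c)"
  by (rule ext, rule Dd_div_at, rule pf_LD)

lemma Hess_pf: "pf g \<Longrightarrow> dZ j (dZb k g) q = (Dd (ev j 1) (Dd (ev k 1) g) q + \<i> * Dd (ev j 1) (Dd (ev k \<i>) g) q
      - \<i> * Dd (ev j \<i>) (Dd (ev k 1) g) q + Dd (ev j \<i>) (Dd (ev k \<i>) g) q) / 4"
  by (rule Hess_formula; rule pf_LD; rule pf_Dd)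

lemmas pf_simps = pf.intros pf_Dd

definition hom :: "nat \<Rightarrow> (pt \<Rightarrow> complex) \<Rightarrow> bool" where
  "hom d g \<longleftrightarrow> (\<forall>t q. t \<noteq> 0 \<longrightarrow> g (t *\<^sub>R q) = of_real t ^ d * g q)"

lemma Dd_hom:
  assumes g: "pf g" and h: "hom (Suc d) g"
  shows "hom d (Dd v g)"
  unfolding hom_def
proof (intro allI impI)
  fix t :: real and q :: pt assume t: "t \<noteq> 0"
  have eqf: "(\<lambda>q. g (t *\<^sub>R q)) = (\<lambda>q. of_real t ^ Suc d * g q)"
    using h t unfolding hom_def by auto
  have 1: "Dd v (\<lambda>q. g (t *\<^sub>R q)) q = of_real t ^ Suc d * Dd v g q"
    unfolding eqf by (rule Dd_cmul_at, rule pf_LD[OF g])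
  have d1: "((\<lambda>s::real. t * s) has_vector_derivative t) (at 0)"
    using has_vector_derivative_mult_right[OF has_vector_derivative_id, of t] by simp
  have d2: "((\<lambda>s::real. g (t *\<^sub>R q + s *\<^sub>R v)) has_vector_derivative Dd v g (t *\<^sub>R q)) (at (t * 0))"
    using Dd_works[OF pf_LD[OF g]] by simp
  have "((\<lambda>s::real. g (t *\<^sub>R q + s *\<^sub>R v)) \<circ> (\<lambda>s. t * s) has_vector_derivative t *\<^sub>R Dd v g (t *\<^sub>R q)) (at 0)"
    by (rule vector_diff_chain_at[OF d1 d2])
  moreover have "((\<lambda>s::real. g (t *\<^sub>R q + s *\<^sub>R v)) \<circ> (\<lambda>s. t * s)) = (\<lambda>s. g (t *\<^sub>R (q + s *\<^sub>R v)))"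
    by (auto simp: scaleR_add_right)
  ultimately have "Dd v (\<lambda>q. g (t *\<^sub>R q)) q = t *\<^sub>R Dd v g (t *\<^sub>R q)"
    by (intro Dd_eqI) simp
  with 1 have "of_real t * Dd v g (t *\<^sub>R q) = of_real t * (of_real t ^ d * Dd v g q)"
    by (simp add: scaleR_conv_of_real)
  then show "Dd v g (t *\<^sub>R q) = of_real t ^ d * Dd v g q" using t by simp
qed

lemma Hess_hom:
  assumes g: "pf g" and h: "hom (Suc (Suc d)) g" and t: "t \<noteq> 0"
  shows "dZ j (dZb k g) (t *\<^sub>R q) = of_real t ^ d * dZ j (dZb k g) q"
proof -
  have H: "\<And>u v. Dd u (Dd v g) (t *\<^sub>R q) = of_real t ^ d * Dd u (Dd v g) q"
    using Dd_hom[OF pf_Dd[OF g] Dd_hom[OF g h]] t unfolding hom_def by blast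
  show ?thesis unfolding Hess_pf[OF g] H by (simp add: field_simps)
qed

lemma pf_sum: "finite A \<Longrightarrow> (\<And>i. i \<in> A \<Longrightarrow> pf (g i)) \<Longrightarrow> pf (\<lambda>q. \<Sum>i\<in>A. g i q)"
proof (induction A rule: finite_induct)
  case empty then show ?case using pf_const[of 0] by simp
next
  case (insert x F) then show ?case by (simp add: pf_add)
qed

lemma pf_pow: "pf f \<Longrightarrow> pf (\<lambda>q. f q ^ n)"
  by (induction n) (auto intro: pf.intros)

lemma pf_re2: "pf f \<Longrightarrow> pf (\<lambda>q. complex_of_real (2 * Re (f q)))"
  unfolding complex_add_cnj[symmetric] by (intro pf.intros)

lemma pf_cm2: "pf f \<Longrightarrow> pf (\<lambda>q. complex_of_real (cmod (f q) ^ 2))"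
  unfolding complex_norm_square by (intro pf.intros)

lemma pf_zv: "pf (\<lambda>q. zv (fst q) (fst (snd q)) i)"
  by (cases "i = 0") (auto simp: zv_def intro: pf.intros)

lemma pf_lin: assumes "is_linear_form A" shows "pf (\<lambda>q. A (fst q) (fst (snd q)))"
proof -
  obtain a b where c: "\<And>z1 z2. A z1 z2 = a * z1 + b * z2" using assms unfolding is_linear_form_def by blast
  show ?thesis unfolding c by (intro pf.intros)
qed
lemma pf_quad: assumes "is_quadratic_form A" shows "pf (\<lambda>q. A (fst q) (fst (snd q)))"
proof -
  obtain a b d where c: "\<And>z1 z2. A z1 z2 = a * z1^2 + b * z1 * z2 + d * z2^2" using assms unfolding is_quadratic_form_def by blast
  show ?thesis unfolding c by (intro pf.intros pf_pow)
qed
lemma pf_cubic: assumes "is_cubic_form A" shows "pf (\<lambda>q. A (fst q) (fst (snd q)))"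
proof -
  obtain a b d e where c: "\<And>z1 z2. A z1 z2 = a * z1^3 + b * z1^2 * z2 + d * z1 * z2^2 + e * z2^3" using assms unfolding is_cubic_form_def by blast
  show ?thesis unfolding c by (intro pf.intros pf_pow)
qed
lemma pf_21: assumes "is_bideg21 A" shows "pf (\<lambda>q. A (fst q) (fst (snd q)))"
proof -
  obtain c where c: "\<And>z1 z2. A z1 z2 = (\<Sum>i<2. \<Sum>j<2. \<Sum>l<2. c i j l * zv z1 z2 i * zv z1 z2 j * cnj (zv z1 z2 l))"
    using assms unfolding is_bideg21_def by blast
  show ?thesis unfolding c by (intro pf.intros pf_sum finite_lessThan pf_zv)
qed
lemma pf_22: assumes "is_bideg22 A" shows "pf (\<lambda>q. A (fst q) (fst (snd q)))"
proof -
  obtain c where c: "\<And>z1 z2. A z1 z2 = (\<Sum>i<2. \<Sum>j<2. \<Sum>l<2. \<Sum>r<2.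
                   c i j l r * zv z1 z2 i * zv z1 z2 j * cnj (zv z1 z2 l) * cnj (zv z1 z2 r))"
    using assms unfolding is_bideg22_def by blast
  show ?thesis unfolding c by (intro pf.intros pf_sum finite_lessThan pf_zv)
qed
lemma pf_herm: assumes "is_hermitian_form A" shows "pf (\<lambda>q. A (fst q) (fst (snd q)))"
proof -
  obtain c where c: "\<And>z1 z2. A z1 z2 = (\<Sum>i<2. \<Sum>j<2. c i j * zv z1 z2 i * cnj (zv z1 z2 j))"
    using assms unfolding is_hermitian_form_def by blast
  show ?thesis unfolding c by (intro pf.intros pf_sum finite_lessThan pf_zv)
qed

lemma zv_sc: "zv (of_real t * x) (of_real t * y) i = of_real t * zv x y i"
  by (simp add: zv_def)

lemma hom_lin: assumes "is_linear_form A" shows "A (of_real t * x) (of_real t * y) = of_real t * A x y"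
proof -
  obtain a b where c: "\<And>z1 z2. A z1 z2 = a * z1 + b * z2" using assms unfolding is_linear_form_def by blast
  show ?thesis unfolding c by (simp add: algebra_simps)
qed
lemma hom_quad: assumes "is_quadratic_form A" shows "A (of_real t * x) (of_real t * y) = of_real t ^ 2 * A x y"
proof -
  obtain a b d where c: "\<And>z1 z2. A z1 z2 = a * z1^2 + b * z1 * z2 + d * z2^2" using assms unfolding is_quadratic_form_def by blast
  show ?thesis unfolding c by (simp add: algebra_simps power2_eq_square)
qed
lemma hom_cubic: assumes "is_cubic_form A" shows "A (of_real t * x) (of_real t * y) = of_real t ^ 3 * A x y"
proof -
  obtain a b d e where c: "\<And>z1 z2. A z1 z2 = a * z1^3 + b * z1^2 * z2 + d * z1 * z2^2 + e * z2^3" using assms unfolding is_cubic_form_def by blast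
  show ?thesis unfolding c by (simp add: algebra_simps power2_eq_square power3_eq_cube)
qed
lemma hom_21: assumes "is_bideg21 A" shows "A (of_real t * x) (of_real t * y) = of_real t ^ 3 * A x y"
proof -
  obtain c where c: "\<And>z1 z2. A z1 z2 = (\<Sum>i<2. \<Sum>j<2. \<Sum>l<2. c i j l * zv z1 z2 i * zv z1 z2 j * cnj (zv z1 z2 l))"
    using assms unfolding is_bideg21_def by blast
  show ?thesis unfolding c zv_sc sum_distrib_left
    by (intro sum.cong refl) (simp add: power3_eq_cube mult_ac)
qed
lemma hom_22: assumes "is_bideg22 A" shows "A (of_real t * x) (of_real t * y) = of_real t ^ 4 * A x y"
proof -
  obtain c where c: "\<And>z1 z2. A z1 z2 = (\<Sum>i<2. \<Sum>j<2. \<Sum>l<2. \<Sum>r<2.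
                   c i j l r * zv z1 z2 i * zv z1 z2 j * cnj (zv z1 z2 l) * cnj (zv z1 z2 r))"
    using assms unfolding is_bideg22_def by blast
  show ?thesis unfolding c zv_sc sum_distrib_left
    by (intro sum.cong refl) (simp add: power4_eq_xxxx mult_ac)
qed
lemma hom_herm: assumes "is_hermitian_form A" shows "A (of_real t * x) (of_real t * y) = of_real t ^ 2 * A x y"
proof -
  obtain c where c: "\<And>z1 z2. A z1 z2 = (\<Sum>i<2. \<Sum>j<2. c i j * zv z1 z2 i * cnj (zv z1 z2 j))"
    using assms unfolding is_hermitian_form_def by blast
  show ?thesis unfolding c zv_sc sum_distrib_left
    by (intro sum.cong refl) (simp add: power2_eq_square mult_ac)
qed

lemma stencil:
  fixes f :: "real \<Rightarrow> real"
  assumes h: "h > 0" and d0: "diff 0 = f"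
    and dS: "\<forall>m t. m < 5 \<and> 0 \<le> t \<and> t \<le> 4*h \<longrightarrow> DERIV (diff m) t :> diff (Suc m) t"
    and E: "\<forall>t. 0 \<le> t \<and> t \<le> 4*h \<longrightarrow> \<bar>f t\<bar> \<le> E"
    and M: "\<forall>t. 0 \<le> t \<and> t \<le> 4*h \<longrightarrow> \<bar>diff 5 t\<bar> \<le> M"
  shows "\<bar>diff 1 0\<bar> \<le> 11 * E / h + 6 * M * h^4"
proof -
  have T: "\<exists>R. \<bar>R\<bar> \<le> M * (j*h)^5 / 120 \<and>
      f (j*h) = diff 0 0 + diff 1 0 * (j*h) + diff 2 0 / 2 * (j*h)^2 + diff 3 0 / 6 * (j*h)^3
         + diff 4 0 / 24 * (j*h)^4 + R" if j: "j \<in> {1,2,3,4}" for j :: real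
  proof -
    have jh: "0 < j*h" "j*h \<le> 4*h" using j h by auto
    have "\<forall>m t. m < 5 \<and> 0 \<le> t \<and> t \<le> j*h \<longrightarrow> DERIV (diff m) t :> diff (Suc m) t"
      using dS jh by auto
    from Maclaurin[OF jh(1) _ d0 this]
    obtain t where t: "0 < t" "t < j*h"
      "f (j*h) = (\<Sum>m<5. diff m 0 / fact m * (j*h)^m) + diff 5 t / fact 5 * (j*h)^5" by auto
    have "\<bar>diff 5 t / fact 5 * (j*h)^5\<bar> \<le> M * (j*h)^5 / 120"
    proof -
      have "\<bar>diff 5 t\<bar> \<le> M" using M t jh by auto
      moreover have "(fact 5 :: real) = 120" by (simp add: fact_numeral)
      ultimately show ?thesis using jh by (simp add: abs_mult divide_right_mono mult_right_mono)
    qed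
    moreover have "(\<Sum>m<5. diff m 0 / fact m * (j*h)^m) = diff 0 0 + diff 1 0 * (j*h) + diff 2 0 / 2 * (j*h)^2 + diff 3 0 / 6 * (j*h)^3
         + diff 4 0 / 24 * (j*h)^4"
      by (simp add: numeral_eq_Suc fact_numeral)
    ultimately show ?thesis using t by auto
  qed
  obtain R1 where R1: "\<bar>R1\<bar> \<le> M * (1*h)^5 / 120" "f (1*h) = diff 0 0 + diff 1 0 * (1*h) + diff 2 0 / 2 * (1*h)^2 + diff 3 0 / 6 * (1*h)^3
         + diff 4 0 / 24 * (1*h)^4 + R1" using T[of 1] by auto
  obtain R2 where R2: "\<bar>R2\<bar> \<le> M * (2*h)^5 / 120" "f (2*h) = diff 0 0 + diff 1 0 * (2*h) + diff 2 0 / 2 * (2*h)^2 + diff 3 0 / 6 * (2*h)^3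
         + diff 4 0 / 24 * (2*h)^4 + R2" using T[of 2] by auto
  obtain R3 where R3: "\<bar>R3\<bar> \<le> M * (3*h)^5 / 120" "f (3*h) = diff 0 0 + diff 1 0 * (3*h) + diff 2 0 / 2 * (3*h)^2 + diff 3 0 / 6 * (3*h)^3
         + diff 4 0 / 24 * (3*h)^4 + R3" using T[of 3] by auto
  obtain R4 where R4: "\<bar>R4\<bar> \<le> M * (4*h)^5 / 120" "f (4*h) = diff 0 0 + diff 1 0 * (4*h) + diff 2 0 / 2 * (4*h)^2 + diff 3 0 / 6 * (4*h)^3
         + diff 4 0 / 24 * (4*h)^4 + R4" using T[of 4] by auto
  have f0: "f 0 = diff 0 0" using d0 by simp
  have key: "12 * h * diff 1 0 = -25 * f 0 + 48 * f (1*h) - 36 * f (2*h) + 16 * f (3*h) - 3 * f (4*h)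
     - (48 * R1 - 36 * R2 + 16 * R3 - 3 * R4)"
    unfolding R1(2) R2(2) R3(2) R4(2) f0 by (simp add: algebra_simps power2_eq_square power3_eq_cube power4_eq_xxxx)
  have Ej: "\<bar>f (j*h)\<bar> \<le> E" if "j \<in> {0,1,2,3,4}" for j :: real using E that h by auto
  have "\<bar>12 * h * diff 1 0\<bar> \<le> 25 * E + 48 * E + 36 * E + 16 * E + 3 * E
        + (48 * \<bar>R1\<bar> + 36 * \<bar>R2\<bar> + 16 * \<bar>R3\<bar> + 3 * \<bar>R4\<bar>)"
  proof -
    have e: "\<bar>f 0\<bar> \<le> E" "\<bar>f (1*h)\<bar> \<le> E" "\<bar>f (2*h)\<bar> \<le> E" "\<bar>f (3*h)\<bar> \<le> E" "\<bar>f (4*h)\<bar> \<le> E"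
      using Ej[of 0] Ej[of 1] Ej[of 2] Ej[of 3] Ej[of 4] by auto
    show ?thesis unfolding key using e by linarith
  qed
  also have "\<dots> \<le> 128 * E + 68 * M * h^5"
    using R1(1) R2(1) R3(1) R4(1) by (simp add: power_mult_distrib)
  finally have "12 * h * \<bar>diff 1 0\<bar> \<le> 128 * E + 68 * M * h^5" using h by (simp add: abs_mult)
  hence "\<bar>diff 1 0\<bar> \<le> (128 * E + 68 * M * h^5) / (12 * h)" using h by (simp add: field_simps)
  also have "\<dots> = 128/12 * E / h + 68/12 * M * h^4" using h by (simp add: field_simps power_eq_if)
  also have "\<dots> \<le> 11 * E / h + 6 * M * h^4"
  proof -
    have E0: "E \<ge> 0" using E h by force
    have M0: "M \<ge> 0" using M h by force
    show ?thesis using E0 M0 h by (intro add_mono divide_right_mono mult_right_mono) auto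
  qed
  finally show ?thesis .
qed

lemma Cinf_LD: "C_inf_on U G \<Longrightarrow> p \<in> U \<Longrightarrow> LD (foldr Dd vs G) p v"
  unfolding C_inf_on_def LD_def by blast

lemma Cinf_Dd: assumes "C_inf_on U G" shows "C_inf_on U (Dd w G)"
  unfolding C_inf_on_def
proof (rule allI, rule conjI)
  fix vs
  have H: "\<forall>vs. continuous_on U (foldr Dd vs G) \<and>
        (\<forall>v. \<forall>p\<in>U. (\<lambda>t::real. foldr Dd vs G (p + t *\<^sub>R v)) differentiable (at 0))"
    using assms unfolding C_inf_on_def .
  have e: "foldr Dd vs (Dd w G) = foldr Dd (vs @ [w]) G" by simp
  show "continuous_on U (foldr Dd vs (Dd w G))" unfolding e using H by blast
  show "\<forall>v. \<forall>p\<in>U. (\<lambda>t::real. foldr Dd vs (Dd w G) (p + t *\<^sub>R v)) differentiable (at 0)"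
    unfolding e using H by blast
qed

lemma line_deriv:
  assumes "C_inf_on U G" "q + s *\<^sub>R w \<in> U"
  shows "((\<lambda>s. foldr Dd vs G (q + s *\<^sub>R w)) has_vector_derivative Dd w (foldr Dd vs G) (q + s *\<^sub>R w)) (at s)"
proof -
  let ?F = "foldr Dd vs G" and ?p = "q + s *\<^sub>R w"
  have g: "((\<lambda>\<tau>::real. ?F (?p + \<tau> *\<^sub>R w)) has_vector_derivative Dd w ?F ?p) (at ((\<lambda>\<sigma>. \<sigma> - s) s))"
    using Dd_works[OF Cinf_LD[OF assms]] by simp
  have f: "((\<lambda>\<sigma>::real. \<sigma> - s) has_vector_derivative 1) (at s)"
    by (rule has_vector_derivative_diff[of "\<lambda>x. x" 1 _ "\<lambda>x. s" 0, simplified])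
  have "((\<lambda>\<tau>. ?F (?p + \<tau> *\<^sub>R w)) \<circ> (\<lambda>\<sigma>. \<sigma> - s) has_vector_derivative 1 *\<^sub>R Dd w ?F ?p) (at s)"
    by (rule vector_diff_chain_at[OF f g])
  moreover have "(\<lambda>\<tau>. ?F (?p + \<tau> *\<^sub>R w)) \<circ> (\<lambda>\<sigma>. \<sigma> - s) = (\<lambda>\<sigma>. ?F (q + \<sigma> *\<^sub>R w))"
    by (auto simp: algebra_simps)
  ultimately show ?thesis by simp
qed

lemma line_deriv_ReIm:
  assumes "C_inf_on U G" "q + s *\<^sub>R w \<in> U"
  shows "((\<lambda>s. Re (foldr Dd vs G (q + s *\<^sub>R w))) has_real_derivative Re (Dd w (foldr Dd vs G) (q + s *\<^sub>R w))) (at s)"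
    "((\<lambda>s. Im (foldr Dd vs G (q + s *\<^sub>R w))) has_real_derivative Im (Dd w (foldr Dd vs G) (q + s *\<^sub>R w))) (at s)"
  using bounded_linear.has_vector_derivative[OF bounded_linear_Re line_deriv[OF assms]]
    bounded_linear.has_vector_derivative[OF bounded_linear_Im line_deriv[OF assms]]
  by (simp_all add: has_real_derivative_iff_has_vector_derivative)

lemma DER_point:
  assumes CI: "C_inf_on U G" and d: "0 < d" "d \<le> 1" and w: "norm w = 1"
    and sub: "\<forall>s. 0 \<le> s \<and> s \<le> d \<longrightarrow> q + s *\<^sub>R w \<in> U"
    and E: "\<forall>s. 0 \<le> s \<and> s \<le> d \<longrightarrow> norm (G (q + s *\<^sub>R w)) \<le> E"
    and M: "\<forall>s. 0 \<le> s \<and> s \<le> d \<longrightarrow> norm (foldr Dd (replicate 5 w) G (q + s *\<^sub>R w)) \<le> M"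
  shows "norm (Dd w G q) \<le> 88 * E / d + M * d^4"
proof -
  have h: "d/4 > 0" using d by simp
  have RI: "\<bar>(if b then Re else Im) (Dd w G q)\<bar> \<le> 11 * E / (d/4) + 6 * M * (d/4)^4" for b
  proof -
    let ?P = "if b then Re else Im"
    let ?diff = "\<lambda>(m::nat) (s::real). ?P (foldr Dd (replicate m w) G (q + s *\<^sub>R w))"
    have dS: "\<forall>m t. m < 5 \<and> 0 \<le> t \<and> t \<le> 4*(d/4) \<longrightarrow> DERIV (?diff m) t :> ?diff (Suc m) t"
    proof (intro allI impI)
      fix m :: nat and t :: real assume mt: "m < 5 \<and> 0 \<le> t \<and> t \<le> 4 * (d / 4)"
      have e: "foldr Dd (replicate (Suc m) w) G = Dd w (foldr Dd (replicate m w) G)" by simp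
      have "q + t *\<^sub>R w \<in> U" using sub mt by auto
      from line_deriv_ReIm[OF CI this, of "replicate m w"]
      show "DERIV (?diff m) t :> ?diff (Suc m) t" unfolding e by (cases b) simp_all
    qed
    have "\<bar>?diff 1 0\<bar> \<le> 11 * E / (d/4) + 6 * M * (d/4)^4"
    proof (rule stencil[OF h refl dS])
      show "\<forall>t. 0 \<le> t \<and> t \<le> 4 * (d / 4) \<longrightarrow> \<bar>?diff 0 t\<bar> \<le> E"
      proof (intro allI impI)
        fix t :: real assume "0 \<le> t \<and> t \<le> 4*(d/4)"
        then have "norm (G (q + t *\<^sub>R w)) \<le> E" using E by auto
        then show "\<bar>?diff 0 t\<bar> \<le> E"
          using abs_Re_le_cmod[of "G (q + t *\<^sub>R w)"] abs_Im_le_cmod[of "G (q + t *\<^sub>R w)"] by (cases b) auto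
      qed
      show "\<forall>t. 0 \<le> t \<and> t \<le> 4 * (d / 4) \<longrightarrow> \<bar>?diff 5 t\<bar> \<le> M"
      proof (intro allI impI)
        fix t :: real assume "0 \<le> t \<and> t \<le> 4*(d/4)"
        then have "norm (foldr Dd (replicate 5 w) G (q + t *\<^sub>R w)) \<le> M" using M by auto
        then show "\<bar>?diff 5 t\<bar> \<le> M"
          using abs_Re_le_cmod[of "foldr Dd (replicate 5 w) G (q + t *\<^sub>R w)"]
            abs_Im_le_cmod[of "foldr Dd (replicate 5 w) G (q + t *\<^sub>R w)"] by (cases b) auto
      qed
    qed
    then show ?thesis by simp
  qed
  have "norm (Dd w G q) \<le> \<bar>Re (Dd w G q)\<bar> + \<bar>Im (Dd w G q)\<bar>" by (rule cmod_le)
  also have "\<dots> \<le> 2 * (11 * E / (d/4) + 6 * M * (d/4)^4)" using RI[of True] RI[of False] by simp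
  also have "\<dots> \<le> 88 * E / d + M * d^4"
  proof -
    have "M \<ge> 0" using M d by (metis norm_ge_zero order_trans order_refl less_imp_le)
    then show ?thesis using d by (simp add: field_simps power_divide)
  qed
  finally show ?thesis .
qed

lemma DER:
  assumes CI: "C_inf_on U G" and r: "r > 0" "cball 0 r \<subseteq> U"
    and B: "\<forall>q\<in>cball 0 r. norm (G q) \<le> C * norm q ^ k"
    and k: "2 \<le> k" "k \<le> 5" and w: "norm w = 1"
  shows "\<exists>C' r'. 0 < r' \<and> r' \<le> r \<and> (\<forall>q\<in>cball 0 r'. norm (Dd w G q) \<le> C' * norm q ^ (k-1))"
proof -
  let ?F5 = "foldr Dd (replicate 5 w) G"
  have "continuous_on (cball 0 r) ?F5"
    using CI r(2) unfolding C_inf_on_def by (meson continuous_on_subset)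
  then have "bounded (?F5 ` cball 0 r)"
    by (intro compact_imp_bounded compact_continuous_image) auto
  then obtain M where M: "\<forall>p\<in>cball 0 r. norm (?F5 p) \<le> M"
    unfolding bounded_iff by auto
  define M0 where "M0 = max M 0"
  define C0 where "C0 = max C 0"
  define r' where "r' = min (r/2) 1"
  define K0 where "K0 = 88 * C0 * 2^k + M0"
  have r'pos: "r' > 0" using r by (simp add: r'_def)
  have K0: "K0 \<ge> 0" by (simp add: K0_def C0_def M0_def)
  have P: "norm (Dd w G q) \<le> K0 * \<delta>^(k-1)" if q: "norm q \<le> \<delta>" and \<delta>: "0 < \<delta>" "\<delta> \<le> r'" for q \<delta>
  proof -
    have inball: "q + s *\<^sub>R w \<in> cball 0 r" and nb: "norm (q + s *\<^sub>R w) \<le> 2 * \<delta>"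
      if "0 \<le> s" "s \<le> \<delta>" for s
    proof -
      have "norm (q + s *\<^sub>R w) \<le> norm q + norm (s *\<^sub>R w)" by (rule norm_triangle_ineq)
      also have "\<dots> \<le> 2 * \<delta>" using that q w by simp
      finally show "norm (q + s *\<^sub>R w) \<le> 2 * \<delta>" .
      then show "q + s *\<^sub>R w \<in> cball 0 r" using \<delta> by (simp add: r'_def)
    qed
    have d1: "\<delta> \<le> 1" using \<delta> by (simp add: r'_def)
    have "norm (Dd w G q) \<le> 88 * (C0 * (2*\<delta>)^k) / \<delta> + M0 * \<delta>^4"
    proof (rule DER_point[OF CI \<delta>(1) d1 w])
      show "\<forall>s. 0 \<le> s \<and> s \<le> \<delta> \<longrightarrow> q + s *\<^sub>R w \<in> U" using inball r(2) by blast
      show "\<forall>s. 0 \<le> s \<and> s \<le> \<delta> \<longrightarrow> norm (G (q + s *\<^sub>R w)) \<le> C0 * (2 * \<delta>) ^ k"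
      proof (intro allI impI)
        fix s assume s: "0 \<le> s \<and> s \<le> \<delta>"
        have "norm (G (q + s *\<^sub>R w)) \<le> C * norm (q + s *\<^sub>R w) ^ k" using B inball s by blast
        also have "\<dots> \<le> C0 * norm (q + s *\<^sub>R w) ^ k" by (simp add: C0_def mult_right_mono)
        also have "\<dots> \<le> C0 * (2 * \<delta>) ^ k" using nb s by (intro mult_left_mono power_mono) (auto simp: C0_def)
        finally show "norm (G (q + s *\<^sub>R w)) \<le> C0 * (2 * \<delta>) ^ k" .
      qed
      show "\<forall>s. 0 \<le> s \<and> s \<le> \<delta> \<longrightarrow> norm (?F5 (q + s *\<^sub>R w)) \<le> M0"
        using M inball by (force simp: M0_def)
    qed
    also have "\<dots> = 88 * C0 * 2^k * \<delta>^(k-1) + M0 * \<delta>^4"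
    proof -
      have "(2*\<delta>)^k / \<delta> = 2^k * \<delta>^(k-1)" using \<delta> k
        by (simp add: power_mult_distrib power_eq_if)
      moreover have "88 * (C0 * (2*\<delta>)^k) / \<delta> = 88 * C0 * ((2*\<delta>)^k / \<delta>)" by simp
      ultimately show ?thesis by simp
    qed
    also have "\<dots> \<le> 88 * C0 * 2^k * \<delta>^(k-1) + M0 * \<delta>^(k-1)"
      using \<delta> d1 k by (intro add_left_mono mult_left_mono power_decreasing) (auto simp: M0_def)
    also have "\<dots> = K0 * \<delta>^(k-1)" by (simp add: K0_def algebra_simps)
    finally show ?thesis .
  qed
  have Z: "Dd w G 0 = 0"
  proof (rule ccontr)
    assume "Dd w G 0 \<noteq> 0"
    then have a: "norm (Dd w G 0) > 0" by simp
    define \<delta> where "\<delta> = min r' (norm (Dd w G 0) / (2 * (K0 + 1)))"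
    have \<delta>: "0 < \<delta>" "\<delta> \<le> r'" using a r'pos K0 by (auto simp: \<delta>_def)
    have d1: "\<delta> \<le> 1" using \<delta> by (simp add: r'_def)
    have "norm (Dd w G 0) \<le> K0 * \<delta>^(k-1)" using P[of 0 \<delta>] \<delta> by simp
    also have "\<dots> \<le> K0 * \<delta>" using \<delta> d1 k K0 by (intro mult_left_mono power_le_one_iff[THEN iffD2] ) (auto intro!: power_decreasing[of 1, simplified])
    also have "\<dots> \<le> K0 * (norm (Dd w G 0) / (2 * (K0 + 1)))" using K0 by (intro mult_left_mono) (auto simp: \<delta>_def)
    also have "\<dots> < norm (Dd w G 0)" using a K0 by (simp add: field_simps add_nonneg_pos)
    finally show False by simp
  qed
  show ?thesis
  proof (intro exI conjI ballI)
    show "0 < r'" by (rule r'pos)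
    show "r' \<le> r" using r by (simp add: r'_def)
    fix q :: pt assume "q \<in> cball 0 r'"
    then have q: "norm q \<le> r'" by simp
    show "norm (Dd w G q) \<le> K0 * norm q ^ (k - 1)"
    proof (cases "q = 0")
      case True
      then show ?thesis using Z k K0 by (simp add: power_0_left)
    next
      case False then show ?thesis using P[of q "norm q"] q by simp
    qed
  qed
qed

lemma norm_ev: "norm (ev j c) = cmod c"
  by (simp add: ev_def norm_Pair)

lemma DD_bound:
  assumes CI: "C_inf_on U G" and U: "open U" "0 \<in> U"
    and B: "\<forall>p\<in>U. norm (G p) \<le> C * norm p ^ 5"
    and u: "norm u = 1" and v: "norm v = 1"
  shows "\<exists>C' r'. 0 < r' \<and> cball 0 r' \<subseteq> U \<and> (\<forall>q\<in>cball 0 r'. norm (Dd u (Dd v G) q) \<le> C' * norm q ^ 3)"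
proof -
  obtain r where r: "r > 0" "cball 0 r \<subseteq> U" using U open_contains_cball by blast
  have B': "\<forall>q\<in>cball 0 r. norm (G q) \<le> C * norm q ^ 5" using B r by blast
  obtain C1 r1 where 1: "0 < r1" "r1 \<le> r" "\<forall>q\<in>cball 0 r1. norm (Dd v G q) \<le> C1 * norm q ^ (5-1)"
    using DER[OF CI r B' _ _ v] by auto
  have r1: "cball 0 r1 \<subseteq> U" using 1 r by auto
  have b1: "\<forall>q\<in>cball 0 r1. norm (Dd v G q) \<le> C1 * norm q ^ 4" using 1(3) by simp
  have "\<exists>C' r'. 0 < r' \<and> r' \<le> r1 \<and> (\<forall>q\<in>cball 0 r'. norm (Dd u (Dd v G) q) \<le> C' * norm q ^ (4-1))"
    by (rule DER[OF Cinf_Dd[OF CI] 1(1) r1 b1 _ _ u]) simp_all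
  then obtain C2 r2 where 2: "0 < r2" "r2 \<le> r1" "\<forall>q\<in>cball 0 r2. norm (Dd u (Dd v G) q) \<le> C2 * norm q ^ (4-1)"
    by blast
  show ?thesis using 2 r1 by (intro exI[of _ C2] exI[of _ r2]) auto
qed

lemma Hess_Cinf:
  assumes CI: "C_inf_on U G" and q: "q \<in> U"
  shows "dZ j (dZb k G) q = (Dd (ev j 1) (Dd (ev k 1) G) q + \<i> * Dd (ev j 1) (Dd (ev k \<i>) G) q
      - \<i> * Dd (ev j \<i>) (Dd (ev k 1) G) q + Dd (ev j \<i>) (Dd (ev k \<i>) G) q) / 4"
  using Cinf_LD[OF CI q, of "[ev k 1]"] Cinf_LD[OF CI q, of "[ev k \<i>]"]
  by (intro Hess_formula) auto

lemma HessR_bound: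
  assumes CI: "C_inf_on U G" and U: "open U" "0 \<in> U"
    and B: "\<forall>p\<in>U. norm (G p) \<le> C * norm p ^ 5"
  shows "\<exists>C' r'. 0 < r' \<and> cball 0 r' \<subseteq> U \<and> (\<forall>q\<in>cball 0 r'. norm (dZ j (dZb k G) q) \<le> C' * norm q ^ 3)"
proof -
  have n: "norm (ev j 1) = 1" "norm (ev j \<i>) = 1" "norm (ev k 1) = 1" "norm (ev k \<i>) = 1"
    by (simp_all add: norm_ev)
  obtain C1 r1 where 1: "0 < r1" "cball 0 r1 \<subseteq> U" "\<forall>q\<in>cball 0 r1. norm (Dd (ev j 1) (Dd (ev k 1) G) q) \<le> C1 * norm q ^ 3"
    using DD_bound[OF CI U B n(1) n(3)] by blast
  obtain C2 r2 where 2: "0 < r2" "cball 0 r2 \<subseteq> U" "\<forall>q\<in>cball 0 r2. norm (Dd (ev j 1) (Dd (ev k \<i>) G) q) \<le> C2 * norm q ^ 3"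
    using DD_bound[OF CI U B n(1) n(4)] by blast
  obtain C3 r3 where 3: "0 < r3" "cball 0 r3 \<subseteq> U" "\<forall>q\<in>cball 0 r3. norm (Dd (ev j \<i>) (Dd (ev k 1) G) q) \<le> C3 * norm q ^ 3"
    using DD_bound[OF CI U B n(2) n(3)] by blast
  obtain C4 r4 where 4: "0 < r4" "cball 0 r4 \<subseteq> U" "\<forall>q\<in>cball 0 r4. norm (Dd (ev j \<i>) (Dd (ev k \<i>) G) q) \<le> C4 * norm q ^ 3"
    using DD_bound[OF CI U B n(2) n(4)] by blast
  define r where "r = min (min r1 r2) (min r3 r4)"
  have r: "0 < r" "cball 0 r \<subseteq> U" using 1 2 3 4 by (auto simp: r_def)
  have "\<forall>q\<in>cball 0 r. norm (dZ j (dZb k G) q) \<le> (C1 + C2 + C3 + C4) / 4 * norm q ^ 3"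
  proof
    fix q :: pt assume qr: "q \<in> cball 0 r"
    then have q: "q \<in> U" "q \<in> cball 0 r1" "q \<in> cball 0 r2" "q \<in> cball 0 r3" "q \<in> cball 0 r4"
      using r by (auto simp: r_def)
    let ?a = "Dd (ev j 1) (Dd (ev k 1) G) q" and ?b = "Dd (ev j 1) (Dd (ev k \<i>) G) q"
      and ?c = "Dd (ev j \<i>) (Dd (ev k 1) G) q" and ?d = "Dd (ev j \<i>) (Dd (ev k \<i>) G) q"
    have "norm (dZ j (dZb k G) q) = norm (?a + \<i> * ?b - \<i> * ?c + ?d) / 4"
      unfolding Hess_Cinf[OF CI q(1)] by simp
    also have "\<dots> \<le> (norm ?a + norm ?b + norm ?c + norm ?d) / 4"
    proof -
      have t1: "norm (?a + \<i> * ?b - \<i> * ?c + ?d) \<le> norm (?a + \<i> * ?b - \<i> * ?c) + norm ?d" by (rule norm_triangle_ineq)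
      have t2: "norm (?a + \<i> * ?b - \<i> * ?c) \<le> norm (?a + \<i> * ?b) + norm (\<i> * ?c)" by (rule norm_triangle_ineq4)
      have t3: "norm (?a + \<i> * ?b) \<le> norm ?a + norm (\<i> * ?b)" by (rule norm_triangle_ineq)
      have t4: "norm (\<i> * ?b) = norm ?b" "norm (\<i> * ?c) = norm ?c" by (simp_all add: norm_mult)
      show ?thesis using t1 t2 t3 t4 by (intro divide_right_mono) linarith+
    qed
    also have "\<dots> \<le> (C1 * norm q ^ 3 + C2 * norm q ^ 3 + C3 * norm q ^ 3 + C4 * norm q ^ 3) / 4"
      using 1(3) 2(3) 3(3) 4(3) q by (intro divide_right_mono add_mono) auto
    also have "\<dots> = (C1 + C2 + C3 + C4) / 4 * norm q ^ 3" by (simp add: algebra_simps)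
    finally show "norm (dZ j (dZb k G) q) \<le> (C1 + C2 + C3 + C4) / 4 * norm q ^ 3" .
  qed
  then show ?thesis using r by blast
qed

definition fHg :: "(nat \<Rightarrow> nat \<Rightarrow> complex) \<Rightarrow> pt \<Rightarrow> complex" where
  "fHg h q = h 0 0 * (fst q * cnj (fst q)) + h 0 1 * (fst q * cnj (fst (snd q)))
     + h 1 0 * (fst (snd q) * cnj (fst q)) + h 1 1 * (fst (snd q) * cnj (fst (snd q)))"

definition f3g :: "(complex \<Rightarrow> complex \<Rightarrow> complex) \<Rightarrow> (complex \<Rightarrow> complex \<Rightarrow> complex) \<Rightarrow> complex \<Rightarrow> pt \<Rightarrow> complex" where
  "f3g K A1 A2 q = complex_of_real (2 * Re (K (fst q) (fst (snd q)) * cnj (snd (snd q))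
      + A1 (fst q) (fst (snd q)) * of_real ((cmod (snd (snd q)))^2)
      + A2 * (snd (snd q))^2 * cnj (snd (snd q))))"

definition f4g :: "(complex \<Rightarrow> complex \<Rightarrow> complex) \<Rightarrow> (complex \<Rightarrow> complex \<Rightarrow> complex) \<Rightarrow> (complex \<Rightarrow> complex \<Rightarrow> complex)
   \<Rightarrow> (complex \<Rightarrow> complex \<Rightarrow> complex) \<Rightarrow> (complex \<Rightarrow> complex \<Rightarrow> complex) \<Rightarrow> (complex \<Rightarrow> complex \<Rightarrow> complex)
   \<Rightarrow> (complex \<Rightarrow> complex \<Rightarrow> complex) \<Rightarrow> (complex \<Rightarrow> complex \<Rightarrow> complex) \<Rightarrow> pt \<Rightarrow> complex" where
  "f4g P Q R S T B1 B2 B3 q =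
      complex_of_real (2 * Re ((P (fst q) (fst (snd q)) + Q (fst q) (fst (snd q))) * cnj (snd (snd q))
          + R (fst q) (fst (snd q)) * (cnj (snd (snd q)))^2))
      + S (fst q) (fst (snd q)) * of_real ((cmod (snd (snd q)))^2) + T (fst q) (fst (snd q))
      + complex_of_real (2 * Re (B1 (fst q) (fst (snd q)) * of_real ((cmod (snd (snd q)))^2)
          + B2 (fst q) (fst (snd q)) * (snd (snd q))^2 * cnj (snd (snd q))
          + B3 (fst q) (fst (snd q)) * (snd (snd q)) * (cnj (snd (snd q)))^2))"

lemma re2c: "complex_of_real (2 * Re z) = z + cnj z" by (simp add: complex_add_cnj)

lemma pf_fHg: "pf (fHg h)"
  unfolding fHg_def[abs_def] by (intro pf.intros)

lemma pf_f3g: "is_quadratic_form K \<Longrightarrow> is_linear_form A1 \<Longrightarrow> pf (f3g K A1 A2)"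
  unfolding f3g_def[abs_def]
  by (intro pf_re2 pf_add pf_mult pf_quad pf_lin pf_cnj pf_w pf_const pf_pow pf_cm2)

lemma pf_f4g: "is_bideg21 P \<Longrightarrow> is_cubic_form Q \<Longrightarrow> is_quadratic_form R \<Longrightarrow> is_hermitian_form S
  \<Longrightarrow> is_bideg22 T \<Longrightarrow> is_quadratic_form B1 \<Longrightarrow> is_linear_form B2 \<Longrightarrow> is_linear_form B3
  \<Longrightarrow> pf (f4g P Q R S T B1 B2 B3)"
  unfolding f4g_def[abs_def]
  by (intro pf_re2 pf_add pf_mult pf_quad pf_lin pf_21 pf_22 pf_cubic pf_herm pf_cnj pf_w pf_const pf_pow pf_cm2)

lemma sc_fst: "fst (t *\<^sub>R q) = of_real t * fst q" and sc_y: "fst (snd (t *\<^sub>R q)) = of_real t * fst (snd q)"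
  and sc_w: "snd (snd (t *\<^sub>R q)) = of_real t * snd (snd q)"
  by (simp_all add: scaleR_conv_of_real)

lemma hom_fHg: "hom 2 (fHg h)"
  unfolding hom_def fHg_def sc_fst sc_y sc_w by (simp add: algebra_simps power2_eq_square)

lemma hom_f3g: assumes "is_quadratic_form K" "is_linear_form A1" shows "hom 3 (f3g K A1 A2)"
  unfolding hom_def f3g_def sc_fst sc_y sc_w re2c complex_norm_square
  unfolding hom_quad[OF assms(1)] hom_lin[OF assms(2)]
  by (simp add: algebra_simps power2_eq_square power3_eq_cube)

lemma hom_f4g: "is_bideg21 P \<Longrightarrow> is_cubic_form Q \<Longrightarrow> is_quadratic_form R \<Longrightarrow> is_hermitian_form S
  \<Longrightarrow> is_bideg22 T \<Longrightarrow> is_quadratic_form B1 \<Longrightarrow> is_linear_form B2 \<Longrightarrow> is_linear_form B3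
  \<Longrightarrow> hom 4 (f4g P Q R S T B1 B2 B3)"
  unfolding hom_def f4g_def sc_fst sc_y sc_w re2c complex_norm_square
  apply (simp only: hom_quad hom_lin hom_21 hom_22 hom_cubic hom_herm)
  by (simp add: algebra_simps power2_eq_square power3_eq_cube power4_eq_xxxx)

lemma HfH: "dZ 0 (dZb 0 (fHg h)) q = h 0 0" "dZ 0 (dZb 1 (fHg h)) q = h 0 1"
  "dZ 1 (dZb 0 (fHg h)) q = h 1 0" "dZ 1 (dZb 1 (fHg h)) q = h 1 1"
  "dZ 0 (dZb 2 (fHg h)) q = 0" "dZ 1 (dZb 2 (fHg h)) q = 0"
  "dZ 2 (dZb 0 (fHg h)) q = 0" "dZ 2 (dZb 1 (fHg h)) q = 0" "dZ 2 (dZb 2 (fHg h)) q = 0"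
  unfolding Hess_pf[OF pf_fHg] unfolding fHg_def[abs_def]
  by (simp_all add: pf.intros ev_def field_simps)

lemma Dd_line:
  assumes "\<forall>q. fst q = x0 \<and> fst (snd q) = y0 \<longrightarrow> g q = g' q"
    and "fst v = 0" "fst (snd v) = 0" "fst q = x0" "fst (snd q) = y0"
  shows "Dd v g q = Dd v g' q"
proof -
  have "(\<lambda>t::real. g (q + t *\<^sub>R v)) = (\<lambda>t. g' (q + t *\<^sub>R v))"
  proof
    fix t :: real
    have "fst (q + t *\<^sub>R v) = x0 \<and> fst (snd (q + t *\<^sub>R v)) = y0" using assms(2-5) by simp
    then show "g (q + t *\<^sub>R v) = g' (q + t *\<^sub>R v)" using assms(1) by blast
  qed
  then show ?thesis unfolding Dd_def by simp
qed

lemma Hess22_line: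
  assumes "\<forall>q. fst q = fst p \<and> fst (snd q) = fst (snd p) \<longrightarrow> g q = g' q"
  shows "dZ 2 (dZb 2 g) p = dZ 2 (dZb 2 g') p"
proof -
  have 1: "\<forall>q. fst q = fst p \<and> fst (snd q) = fst (snd p) \<longrightarrow> dZb 2 g q = dZb 2 g' q"
    unfolding dZb_def using Dd_line[OF assms] by (auto simp: ev_def)
  show ?thesis unfolding dZ_def using Dd_line[OF 1] by (auto simp: ev_def)
qed

lemma Hf3_22:
  "dZ 2 (dZb 2 (f3g K A1 A2)) p = A1 (fst p) (fst (snd p)) + cnj (A1 (fst p) (fst (snd p)))
     + 2 * A2 * snd (snd p) + 2 * cnj A2 * cnj (snd (snd p))"
proof -
  let ?a = "K (fst p) (fst (snd p))" and ?b = "A1 (fst p) (fst (snd p))"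
  let ?g = "\<lambda>q. ?a * cnj (snd (snd q)) + ?b * (snd (snd q) * cnj (snd (snd q)))
      + A2 * (snd (snd q) * snd (snd q) * cnj (snd (snd q)))
      + (cnj ?a * snd (snd q) + cnj ?b * (cnj (snd (snd q)) * snd (snd q))
      + cnj A2 * (cnj (snd (snd q)) * cnj (snd (snd q)) * snd (snd q)))"
  have "dZ 2 (dZb 2 (f3g K A1 A2)) p = dZ 2 (dZb 2 ?g) p"
  proof (rule Hess22_line, intro allI impI)
    fix q :: pt assume a: "fst q = fst p \<and> fst (snd q) = fst (snd p)"
    show "f3g K A1 A2 q = ?g q" unfolding f3g_def re2c complex_norm_square using a
      by (simp add: algebra_simps power2_eq_square)
  qed
  also have "\<dots> = ?b + cnj ?b + 2 * A2 * snd (snd p) + 2 * cnj A2 * cnj (snd (snd p))"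
    by (subst Hess_pf) (simp_all add: pf.intros ev_def field_simps)
  finally show ?thesis .
qed

lemma Hf4_22:
  "dZ 2 (dZb 2 (f4g P Q R S T B1 B2 B3)) p = S (fst p) (fst (snd p))
     + B1 (fst p) (fst (snd p)) + cnj (B1 (fst p) (fst (snd p)))
     + 2 * B2 (fst p) (fst (snd p)) * snd (snd p) + 2 * cnj (B2 (fst p) (fst (snd p))) * cnj (snd (snd p))
     + 2 * B3 (fst p) (fst (snd p)) * cnj (snd (snd p)) + 2 * cnj (B3 (fst p) (fst (snd p))) * snd (snd p)"
proof -
  let ?P = "P (fst p) (fst (snd p)) + Q (fst p) (fst (snd p))" and ?R = "R (fst p) (fst (snd p))"
    and ?S = "S (fst p) (fst (snd p))" and ?T = "T (fst p) (fst (snd p))"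
    and ?B1 = "B1 (fst p) (fst (snd p))" and ?B2 = "B2 (fst p) (fst (snd p))" and ?B3 = "B3 (fst p) (fst (snd p))"
  let ?g = "\<lambda>q. ?P * cnj (snd (snd q)) + ?R * (cnj (snd (snd q)) * cnj (snd (snd q)))
      + (cnj ?P * snd (snd q) + cnj ?R * (snd (snd q) * snd (snd q)))
      + ?S * (snd (snd q) * cnj (snd (snd q))) + ?T
      + (?B1 * (snd (snd q) * cnj (snd (snd q))) + ?B2 * (snd (snd q) * snd (snd q) * cnj (snd (snd q)))
         + ?B3 * (snd (snd q) * (cnj (snd (snd q)) * cnj (snd (snd q))))
         + (cnj ?B1 * (cnj (snd (snd q)) * snd (snd q)) + cnj ?B2 * (cnj (snd (snd q)) * cnj (snd (snd q)) * snd (snd q))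
         + cnj ?B3 * (cnj (snd (snd q)) * (snd (snd q) * snd (snd q)))))"
  have "dZ 2 (dZb 2 (f4g P Q R S T B1 B2 B3)) p = dZ 2 (dZb 2 ?g) p"
  proof (rule Hess22_line, intro allI impI)
    fix q :: pt assume a: "fst q = fst p \<and> fst (snd q) = fst (snd p)"
    show "f4g P Q R S T B1 B2 B3 q = ?g q" unfolding f4g_def re2c complex_norm_square using a
      by (simp add: algebra_simps power2_eq_square)
  qed
  also have "\<dots> = ?S + ?B1 + cnj ?B1 + 2 * ?B2 * snd (snd p) + 2 * cnj ?B2 * cnj (snd (snd p))
     + 2 * ?B3 * cnj (snd (snd p)) + 2 * cnj ?B3 * snd (snd p)"
    by (subst Hess_pf) (simp_all add: pf.intros ev_def field_simps)
  finally show ?thesis .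
qed

definition Kg :: "complex \<Rightarrow> complex \<Rightarrow> complex \<Rightarrow> complex \<Rightarrow> complex \<Rightarrow> complex" where
  "Kg a b c x y = a * x^2 + b * x * y + c * y^2"

lemma f3g_K0: "f3g (Kg a b c) (\<lambda>x y. 0) 0 = (\<lambda>q. (a * (fst q * fst q) + b * (fst q * fst (snd q)) + c * (fst (snd q) * fst (snd q))) * cnj (snd (snd q))
   + cnj (a * (fst q * fst q) + b * (fst q * fst (snd q)) + c * (fst (snd q) * fst (snd q))) * snd (snd q))"
  by (rule ext) (simp only: f3g_def re2c, simp add: Kg_def power2_eq_square algebra_simps)

lemma Hf3_mixed:
  shows "dZ 0 (dZb 2 (f3g (Kg a b c) (\<lambda>x y. 0) 0)) p = 2 * a * fst p + b * fst (snd p)"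
    "dZ 1 (dZb 2 (f3g (Kg a b c) (\<lambda>x y. 0) 0)) p = b * fst p + 2 * c * fst (snd p)"
    "dZ 2 (dZb 0 (f3g (Kg a b c) (\<lambda>x y. 0) 0)) p = cnj (2 * a * fst p + b * fst (snd p))"
    "dZ 2 (dZb 1 (f3g (Kg a b c) (\<lambda>x y. 0) 0)) p = cnj (b * fst p + 2 * c * fst (snd p))"
  unfolding f3g_K0
  by (subst Hess_pf, simp add: pf.intros, simp add: pf.intros ev_def field_simps)+

lemma ev_nz: "eventually (\<lambda>t::real. t \<noteq> 0) (at 0)"
  by (simp add: eventually_at_filter)

lemma e_small:
  fixes e :: "real \<Rightarrow> complex"
  assumes eb: "eventually (\<lambda>t. norm (e t) \<le> D * \<bar>t\<bar>^3) (at (0::real))" and j: "j \<le> 2"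
  shows "((\<lambda>t. e t / of_real t ^ j) \<longlongrightarrow> 0) (at 0)"
proof (rule Lim_null_comparison)
  show "eventually (\<lambda>t. norm (e t / of_real t ^ j) \<le> D * \<bar>t\<bar>^(3-j)) (at (0::real))"
    using eb ev_nz
  proof eventually_elim
    case (elim t)
    have "norm (e t / of_real t ^ j) = norm (e t) / \<bar>t\<bar>^j" by (simp add: norm_divide norm_power)
    also have "\<dots> \<le> D * \<bar>t\<bar>^3 / \<bar>t\<bar>^j" using elim by (simp add: divide_right_mono)
    also have "\<dots> = D * \<bar>t\<bar>^(3-j)" using elim j by (simp add: power_diff)
    finally show ?case .
  qed
  have "((\<lambda>t. D * \<bar>t\<bar>^(3-j)) \<longlongrightarrow> D * \<bar>0::real\<bar>^(3-j)) (at 0)"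
    by (intro tendsto_intros)
  then show "((\<lambda>t. D * \<bar>t\<bar>^(3-j)) \<longlongrightarrow> 0) (at (0::real))" using j by (simp add: power_0_left)
qed

lemma lim_entry:
  fixes X e :: "real \<Rightarrow> complex"
  assumes ev: "eventually (\<lambda>t. X t = a + of_real t * b + of_real t^2 * c + e t) (at 0)"
    and eb: "eventually (\<lambda>t. norm (e t) \<le> D * \<bar>t\<bar>^3) (at (0::real))"
  shows lim0: "(X \<longlongrightarrow> a) (at 0)"
    and lim1: "a = 0 \<Longrightarrow> ((\<lambda>t. X t / of_real t) \<longlongrightarrow> b) (at 0)"
    and lim2: "a = 0 \<Longrightarrow> b = 0 \<Longrightarrow> ((\<lambda>t. X t / of_real t ^ 2) \<longlongrightarrow> c) (at 0)"
proof -
  have e0: "(e \<longlongrightarrow> 0) (at 0)" using e_small[OF eb, of 0] by simp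
  have e1: "((\<lambda>t. e t / of_real t) \<longlongrightarrow> 0) (at 0)" using e_small[OF eb, of 1] by simp
  have e2: "((\<lambda>t. e t / of_real t ^ 2) \<longlongrightarrow> 0) (at 0)" using e_small[OF eb, of 2] by simp
  have t0: "((\<lambda>t::real. complex_of_real t) \<longlongrightarrow> 0) (at 0)"
    using tendsto_of_real[OF tendsto_ident_at[of "0::real" UNIV]] by simp
  have "((\<lambda>t. a + of_real t * b + of_real t^2 * c + e t) \<longlongrightarrow> a + 0 * b + 0^2 * c + 0) (at 0)"
    by (intro tendsto_intros t0 e0)
  then show "(X \<longlongrightarrow> a) (at 0)" using ev by (simp add: tendsto_cong)
  assume a: "a = 0"
  have ev1: "eventually (\<lambda>t. X t / of_real t = b + of_real t * c + e t / of_real t) (at 0)"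
    using ev ev_nz by eventually_elim (simp add: a field_simps power2_eq_square)
  have "((\<lambda>t. b + of_real t * c + e t / of_real t) \<longlongrightarrow> b + 0 * c + 0) (at 0)"
    by (intro tendsto_intros t0 e1)
  then show "((\<lambda>t. X t / of_real t) \<longlongrightarrow> b) (at 0)" using ev1 by (simp add: tendsto_cong)
  assume b: "b = 0"
  have ev2: "eventually (\<lambda>t. X t / of_real t ^ 2 = c + e t / of_real t ^ 2) (at 0)"
    using ev ev_nz by eventually_elim (simp add: a b field_simps power2_eq_square)
  have "((\<lambda>t. c + e t / of_real t ^ 2) \<longlongrightarrow> c + 0) (at 0)"
    by (intro tendsto_intros e2)
  then show "((\<lambda>t. X t / of_real t ^ 2) \<longlongrightarrow> c) (at 0)" using ev2 by (simp add: tendsto_cong)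
qed

lemma pf_dZb: "pf g \<Longrightarrow> pf (dZb k g)"
  unfolding dZb_def by (intro pf.intros pf_Dd)

lemma LD_dZb_Cinf: "C_inf_on U G \<Longrightarrow> q \<in> U \<Longrightarrow> LD (dZb k G) q v"
  unfolding dZb_def
  using Cinf_LD[of U G q "[ev k 1]" v] Cinf_LD[of U G q "[ev k \<i>]" v]
  by (intro LD_div LD_add LD_cmul) auto

lemma dZ_add_at:
  assumes "LD A q (ev j 1)" "LD A q (ev j \<i>)" "LD B q (ev j 1)" "LD B q (ev j \<i>)"
  shows "dZ j (\<lambda>p. A p + B p) q = dZ j A q + dZ j B q"
  unfolding dZ_def using assms by (simp add: Dd_add_at field_simps)

lemma dZb_add_at:
  assumes "LD A q (ev j 1)" "LD A q (ev j \<i>)" "LD B q (ev j 1)" "LD B q (ev j \<i>)"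
  shows "dZb j (\<lambda>p. A p + B p) q = dZb j A q + dZb j B q"
  unfolding dZb_def using assms by (simp add: Dd_add_at field_simps)

lemma Hess_add_pf:
  assumes a: "pf a" and b: "pf b"
  shows "dZ j (dZb k (\<lambda>q. a q + b q)) q = dZ j (dZb k a) q + dZ j (dZb k b) q"
proof -
  have e: "dZb k (\<lambda>q. a q + b q) = (\<lambda>p. dZb k a p + dZb k b p)"
    by (rule ext, rule dZb_add_at; rule pf_LD; fact)
  show ?thesis unfolding e
    by (rule dZ_add_at; rule pf_LD, rule pf_dZb; fact)
qed

lemma cHess_decomp:
  assumes feq: "\<And>q. complex_of_real (f q) = fp q + R q" and fp: "pf fp"
    and CI: "C_inf_on U R" and U: "open U" and q: "q \<in> U"
  shows "cHess f q j k = dZ j (dZb k fp) q + dZ j (dZb k R) q"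
proof -
  have F: "(\<lambda>q. complex_of_real (f q)) = (\<lambda>q. fp q + R q)" using feq by auto
  have RLD: "LD R p v" if "p \<in> U" for p v using Cinf_LD[OF CI that, of "[]"] by simp
  have 1: "dZb k (\<lambda>q. complex_of_real (f q)) p = dZb k fp p + dZb k R p" if "p \<in> U" for p
    unfolding F by (rule dZb_add_at; (rule pf_LD[OF fp] | rule RLD[OF that]))
  have "cHess f q j k = dZ j (\<lambda>p. dZb k fp p + dZb k R p) q"
    unfolding cHess_def dZ_def using Dd_local[OF U q 1] by simp
  also have "\<dots> = dZ j (dZb k fp) q + dZ j (dZb k R) q"
    by (rule dZ_add_at; (rule pf_LD[OF pf_dZb[OF fp]] | rule LD_dZb_Cinf[OF CI q]))
  finally show ?thesis .
qed

lemma re0: "z + cnj z = 0 \<longleftrightarrow> Re z = 0" by (simp add: complex_eq_iff)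
lemma im0: "z - cnj z = 0 \<longleftrightarrow> Im z = 0" by (simp add: complex_eq_iff)

lemma alg1:
  assumes A1: "is_linear_form A1"
    and E: "\<forall>x y w. A1 x y + cnj (A1 x y) + 2 * A2 * w + 2 * cnj A2 * cnj w = 0"
  shows "(\<forall>x y. A1 x y = 0) \<and> A2 = 0"
proof -
  obtain a b where ab: "\<And>x y. A1 x y = a * x + b * y" using A1 unfolding is_linear_form_def by blast
  have e0: "Re (a * x + b * y) = 0" for x y
  proof -
    have "A1 x y + cnj (A1 x y) = 0" using E[rule_format, of x y 0] by simp
    then have "Re (A1 x y) = 0" by (simp only: re0)
    then show ?thesis by (simp only: ab)
  qed
  have "Re a = 0" using e0[of 1 0] by simp
  moreover have "Im a = 0" using e0[of \<i> 0] by simp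
  moreover have "Re b = 0" using e0[of 0 1] by simp
  moreover have "Im b = 0" using e0[of 0 \<i>] by simp
  ultimately have a0: "a = 0" "b = 0" by (simp_all add: complex_eq_iff)
  have e1: "2 * A2 * w + 2 * cnj A2 * cnj w = 0" for w using E[rule_format, of 0 0 w] unfolding ab a0 by simp
  have "Re A2 = 0" using e1[of 1] by (simp add: complex_eq_iff)
  moreover have "Im A2 = 0" using e1[of \<i>] by (simp add: complex_eq_iff)
  ultimately have "A2 = 0" by (simp add: complex_eq_iff)
  then show ?thesis using ab a0 by simp
qed

lemma alg2:
  assumes B1: "is_quadratic_form B1" and B2: "is_linear_form B2" and B3: "is_linear_form B3"
    and S: "is_hermitian_form S"
    and dt: "dt \<noteq> 0" and RH: "\<And>x y. RH (\<i> * x) (\<i> * y) = RH x y"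
    and E: "\<forall>x y w. dt * (S x y + B1 x y + cnj (B1 x y) + 2 * B2 x y * w + 2 * cnj (B2 x y) * cnj w
              + 2 * B3 x y * cnj w + 2 * cnj (B3 x y) * w) = RH x y"
  shows "(\<forall>x y. B1 x y = 0) \<and> (\<forall>x y. B2 x y = 0) \<and> (\<forall>x y. B3 x y = 0) \<and> (\<forall>x y. dt * S x y = RH x y)"
proof -
  obtain a b where ab: "\<And>x y. B2 x y = a * x + b * y" using B2 unfolding is_linear_form_def by blast
  obtain c d where cd: "\<And>x y. B3 x y = c * x + d * y" using B3 unfolding is_linear_form_def by blast
  obtain p q r where pqr: "\<And>x y. B1 x y = p * x^2 + q * x * y + r * y^2" using B1 unfolding is_quadratic_form_def by blast
  obtain s where s: "\<And>x y. S x y = (\<Sum>i<2. \<Sum>j<2. s i j * zv x y i * cnj (zv x y j))"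
    using S unfolding is_hermitian_form_def by blast
  let ?X = "\<lambda>x y. B2 x y + cnj (B3 x y)"
  have W: "S x y + B1 x y + cnj (B1 x y) + 2 * ?X x y * w + 2 * cnj (?X x y) * cnj w = RH x y / dt" for x y w
    using E[rule_format, of x y w] dt by (simp add: field_simps)
  have X0: "?X x y = 0" for x y
  proof -
    let ?A = "S x y + B1 x y + cnj (B1 x y)" and ?Z = "?X x y"
    have e1: "?A + 2 * ?Z * 1 + 2 * cnj ?Z * cnj 1 = ?A + 2 * ?Z * (-1) + 2 * cnj ?Z * cnj (-1)"
      by (simp only: W)
    have "4 * (?Z + cnj ?Z) = (?A + 2 * ?Z * 1 + 2 * cnj ?Z * cnj 1) - (?A + 2 * ?Z * (-1) + 2 * cnj ?Z * cnj (-1))"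
      by (simp add: algebra_simps)
    also have "\<dots> = 0" by (subst e1) simp
    finally have "?Z + cnj ?Z = 0" by (metis mult_eq_0_iff zero_neq_numeral)
    then have "Re ?Z = 0" by (simp only: re0)
    have e2: "?A + 2 * ?Z * \<i> + 2 * cnj ?Z * cnj \<i> = ?A + 2 * ?Z * (-\<i>) + 2 * cnj ?Z * cnj (-\<i>)"
      by (simp only: W)
    have "4 * \<i> * (?Z - cnj ?Z) = (?A + 2 * ?Z * \<i> + 2 * cnj ?Z * cnj \<i>) - (?A + 2 * ?Z * (-\<i>) + 2 * cnj ?Z * cnj (-\<i>))"
      by (simp add: algebra_simps)
    also have "\<dots> = 0" by (subst e2) simp
    finally have "?Z - cnj ?Z = 0" by (metis mult_eq_0_iff zero_neq_numeral complex_i_not_zero)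
    then have "Im ?Z = 0" by (simp only: im0)
    with \<open>Re ?Z = 0\<close> show ?thesis by (simp add: complex_eq_iff)
  qed
  have "a + cnj c = 0" using X0[of 1 0] by (simp add: ab cd)
  moreover have "\<i> * a + cnj (c * \<i>) = 0" using X0[of \<i> 0] by (simp add: ab cd)
  ultimately have ac: "a = 0" "c = 0" by (simp_all add: complex_eq_iff)
  have "b + cnj d = 0" using X0[of 0 1] by (simp add: ab cd)
  moreover have "\<i> * b + cnj (d * \<i>) = 0" using X0[of 0 \<i>] by (simp add: ab cd)
  ultimately have bd: "b = 0" "d = 0" by (simp_all add: complex_eq_iff)
  have B23: "\<forall>x y. B2 x y = 0" "\<forall>x y. B3 x y = 0" using ab cd ac bd by simp_all
  have W2: "S x y + B1 x y + cnj (B1 x y) = RH x y / dt" for x y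
    using W[of x y 0] by simp
  have Si: "S (\<i> * x) (\<i> * y) = S x y" for x y
    unfolding s by (intro sum.cong refl) (simp add: zv_def)
  have Bi: "B1 (\<i> * x) (\<i> * y) = - B1 x y" for x y
    unfolding pqr by (simp add: power2_eq_square algebra_simps)
  have Re0: "Re (B1 x y) = 0" for x y
  proof -
    have e: "S x y + B1 x y + cnj (B1 x y) = S x y - B1 x y - cnj (B1 x y)"
      using W2[of x y] W2[of "\<i> * x" "\<i> * y"] unfolding Si Bi RH by simp
    have "2 * (B1 x y + cnj (B1 x y)) = (S x y + B1 x y + cnj (B1 x y)) - (S x y - B1 x y - cnj (B1 x y))"
      by (simp add: algebra_simps)
    also have "\<dots> = 0" by (subst e) simp
    finally have "B1 x y + cnj (B1 x y) = 0" by (metis mult_eq_0_iff zero_neq_numeral)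
    then show ?thesis by (simp only: re0)
  qed
  have "Re p = 0" using Re0[of 1 0] by (simp add: pqr)
  moreover have "Im p = 0" using Re0[of "1 + \<i>" 0] by (simp add: pqr power2_eq_square algebra_simps)
  moreover have "Re r = 0" using Re0[of 0 1] by (simp add: pqr)
  moreover have "Im r = 0" using Re0[of 0 "1 + \<i>"] by (simp add: pqr power2_eq_square algebra_simps)
  ultimately have pr: "p = 0" "r = 0" by (simp_all add: complex_eq_iff)
  have "Re q = 0" using Re0[of 1 1] by (simp add: pqr pr)
  moreover have "Im q = 0" using Re0[of 1 \<i>] by (simp add: pqr pr)
  ultimately have "q = 0" by (simp add: complex_eq_iff)
  then have B1z: "\<forall>x y. B1 x y = 0" using pqr pr by simp
  have "dt * S x y = RH x y" for x y using W2[of x y] B1z dt by (simp add: field_simps)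
  then show ?thesis using B1z B23 by simp
qed

lemma det_lim_zero:
  assumes ev: "eventually (\<lambda>t. F t = 0) (at (0::real))" and lim: "(F \<longlongrightarrow> L) (at 0)"
  shows "L = (0::complex)"
proof -
  have "(F \<longlongrightarrow> 0) (at 0)" using ev by (simp add: tendsto_cong)
  then show ?thesis using lim by (rule tendsto_unique[OF at_neq_bot, symmetric])
qed

lemma stage1:
  fixes X :: "nat \<Rightarrow> nat \<Rightarrow> real \<Rightarrow> complex"
  assumes ev: "eventually (\<lambda>t. det3 (\<lambda>j k. X j k t) = 0) (at 0)"
    and l00: "(X 0 0 \<longlongrightarrow> m00) (at 0)" and l01: "(X 0 1 \<longlongrightarrow> m01) (at 0)"
    and l10: "(X 1 0 \<longlongrightarrow> m10) (at 0)" and l11: "(X 1 1 \<longlongrightarrow> m11) (at 0)"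
    and l12: "(X 1 2 \<longlongrightarrow> 0) (at 0)" and l21: "(X 2 1 \<longlongrightarrow> 0) (at 0)" and l20: "(X 2 0 \<longlongrightarrow> 0) (at 0)"
    and d22: "((\<lambda>t. X 2 2 t / of_real t) \<longlongrightarrow> d) (at 0)"
    and d21: "((\<lambda>t. X 2 1 t / of_real t) \<longlongrightarrow> b1) (at 0)"
    and d20: "((\<lambda>t. X 2 0 t / of_real t) \<longlongrightarrow> b0) (at 0)"
    and d02: "((\<lambda>t. X 0 2 t / of_real t) \<longlongrightarrow> g) (at 0)"
  shows "(m00 * m11 - m01 * m10) * d = 0"
proof -
  let ?F = "\<lambda>t. X 0 0 t * (X 1 1 t * (X 2 2 t / of_real t) - X 1 2 t * (X 2 1 t / of_real t))
     - X 0 1 t * (X 1 0 t * (X 2 2 t / of_real t) - X 1 2 t * (X 2 0 t / of_real t))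
     + (X 0 2 t / of_real t) * (X 1 0 t * X 2 1 t - X 1 1 t * X 2 0 t)"
  have "eventually (\<lambda>t. ?F t = 0) (at 0)"
    using ev ev_nz
  proof eventually_elim
    case (elim t)
    have "?F t = det3 (\<lambda>j k. X j k t) / of_real t" unfolding det3_def using elim(2)
      by (simp add: field_simps)
    then show ?case using elim(1) by simp
  qed
  moreover have "(?F \<longlongrightarrow> m00 * (m11 * d - 0 * b1) - m01 * (m10 * d - 0 * b0) + g * (m10 * 0 - m11 * 0)) (at 0)"
    by (intro tendsto_add tendsto_diff tendsto_mult assms)
  ultimately have "m00 * (m11 * d - 0 * b1) - m01 * (m10 * d - 0 * b0) + g * (m10 * 0 - m11 * 0) = 0"
    by (rule det_lim_zero)
  then show ?thesis by (simp add: algebra_simps)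
qed

lemma stage2:
  fixes X :: "nat \<Rightarrow> nat \<Rightarrow> real \<Rightarrow> complex"
  assumes ev: "eventually (\<lambda>t. det3 (\<lambda>j k. X j k t) = 0) (at 0)"
    and l00: "(X 0 0 \<longlongrightarrow> m00) (at 0)" and l01: "(X 0 1 \<longlongrightarrow> m01) (at 0)"
    and l10: "(X 1 0 \<longlongrightarrow> m10) (at 0)" and l11: "(X 1 1 \<longlongrightarrow> m11) (at 0)"
    and d22: "((\<lambda>t. X 2 2 t / of_real t ^ 2) \<longlongrightarrow> D) (at 0)"
    and d12: "((\<lambda>t. X 1 2 t / of_real t) \<longlongrightarrow> b1) (at 0)"
    and d02: "((\<lambda>t. X 0 2 t / of_real t) \<longlongrightarrow> b0) (at 0)"
    and d21: "((\<lambda>t. X 2 1 t / of_real t) \<longlongrightarrow> c1) (at 0)"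
    and d20: "((\<lambda>t. X 2 0 t / of_real t) \<longlongrightarrow> c0) (at 0)"
  shows "m00 * (m11 * D - b1 * c1) - m01 * (m10 * D - b1 * c0) + b0 * (m10 * c1 - m11 * c0) = 0"
proof -
  let ?F = "\<lambda>t. X 0 0 t * (X 1 1 t * (X 2 2 t / of_real t ^ 2) - (X 1 2 t / of_real t) * (X 2 1 t / of_real t))
     - X 0 1 t * (X 1 0 t * (X 2 2 t / of_real t ^ 2) - (X 1 2 t / of_real t) * (X 2 0 t / of_real t))
     + (X 0 2 t / of_real t) * (X 1 0 t * (X 2 1 t / of_real t) - X 1 1 t * (X 2 0 t / of_real t))"
  have "eventually (\<lambda>t. ?F t = 0) (at 0)"
    using ev ev_nz
  proof eventually_elim
    case (elim t)
    have "?F t = det3 (\<lambda>j k. X j k t) / of_real t ^ 2" unfolding det3_def using elim(2)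
      by (simp add: field_simps power2_eq_square)
    then show ?case using elim(1) by simp
  qed
  moreover have "(?F \<longlongrightarrow> m00 * (m11 * D - b1 * c1) - m01 * (m10 * D - b1 * c0) + b0 * (m10 * c1 - m11 * c0)) (at 0)"
    by (intro tendsto_add tendsto_diff tendsto_mult assms)
  ultimately show ?thesis by (rule det_lim_zero)
qed

definition RHf :: "(nat \<Rightarrow> nat \<Rightarrow> complex) \<Rightarrow> complex \<Rightarrow> complex \<Rightarrow> complex \<Rightarrow> complex \<Rightarrow> complex \<Rightarrow> complex" where
  "RHf h ka kb kc x y = h 0 0 * (kb * x + 2 * kc * y) * cnj (kb * x + 2 * kc * y)
     - h 0 1 * (kb * x + 2 * kc * y) * cnj (2 * ka * x + kb * y)
     - h 1 0 * (2 * ka * x + kb * y) * cnj (kb * x + 2 * kc * y)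
     + h 1 1 * (2 * ka * x + kb * y) * cnj (2 * ka * x + kb * y)"

lemma RHf_i: "RHf h ka kb kc (\<i> * x) (\<i> * y) = RHf h ka kb kc x y"
  unfolding RHf_def by (simp add: algebra_simps)

lemma stage2_alg:
  assumes "m00 * (m11 * D - b1 * c1) - m01 * (m10 * D - b1 * c0) + b0 * (m10 * c1 - m11 * c0) = (0::complex)"
  shows "(m00 * m11 - m01 * m10) * D = m00 * b1 * c1 - m01 * b1 * c0 - m10 * b0 * c1 + m11 * b0 * c0"
proof -
  have "(m00 * m11 - m01 * m10) * D - (m00 * b1 * c1 - m01 * b1 * c0 - m10 * b0 * c1 + m11 * b0 * c0)
     = m00 * (m11 * D - b1 * c1) - m01 * (m10 * D - b1 * c0) + b0 * (m10 * c1 - m11 * c0)"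
    by (simp add: algebra_simps)
  then show ?thesis using assms by simp
qed

lemma ev_ball:
  fixes p0 :: pt
  assumes "r > 0"
  shows "eventually (\<lambda>t::real. t \<noteq> 0 \<and> t *\<^sub>R p0 \<in> ball 0 r) (at 0)"
proof -
  have "((\<lambda>t::real. norm (t *\<^sub>R p0)) \<longlongrightarrow> norm ((0::real) *\<^sub>R p0)) (at 0)"
    by (intro tendsto_intros)
  then have "eventually (\<lambda>t::real. norm (t *\<^sub>R p0) < r) (at 0)"
    using assms by (intro order_tendstoD(2)) auto
  then show ?thesis using ev_nz by eventually_elim auto
qed

theorem core:
  fixes h :: "nat \<Rightarrow> nat \<Rightarrow> complex" and ka kb kc :: complex
    and A1 B1 B2 B3 R P Q S T :: "complex \<Rightarrow> complex \<Rightarrow> complex"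
    and A2 :: complex
    and f Rem :: "pt \<Rightarrow> real" and U :: "pt set"
  assumes A1_lin: "is_linear_form A1"
    and B1_quad: "is_quadratic_form B1" and R_quad: "is_quadratic_form R"
    and B2_lin: "is_linear_form B2" and B3_lin: "is_linear_form B3"
    and P_form: "is_bideg21 P" and Q_cubic: "is_cubic_form Q"
    and S_herm: "is_hermitian_form S" and T_form: "is_bideg22 T"
    and f_eq: "\<And>q. complex_of_real (f q) = fHg h q + f3g (Kg ka kb kc) A1 A2 q
        + f4g P Q R S T B1 B2 B3 q + complex_of_real (Rem q)"
    and det: "h 0 0 * h 1 1 - h 0 1 * h 1 0 \<noteq> 0"
    and U_open: "open U" and U_0: "0 \<in> U"
    and Rem_smooth: "C_inf_on U (\<lambda>p. complex_of_real (Rem p))"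
    and Rem_small: "\<exists>C. \<forall>p\<in>U. \<bar>Rem p\<bar> \<le> C * norm p ^ 5"
    and levi_degenerate: "\<forall>p\<in>U. levi_det f p = 0"
  shows "(\<forall>z1 z2. A1 z1 z2 = 0) \<and> A2 = 0 \<and> (\<forall>z1 z2. B1 z1 z2 = 0)
       \<and> (\<forall>z1 z2. B2 z1 z2 = 0) \<and> (\<forall>z1 z2. B3 z1 z2 = 0)
       \<and> (\<forall>x y. (h 0 0 * h 1 1 - h 0 1 * h 1 0) * S x y = RHf h ka kb kc x y)"
proof -
  define Rc where "Rc = (\<lambda>q. complex_of_real (Rem q))"
  define K where "K = Kg ka kb kc"
  have Kq: "is_quadratic_form K" unfolding K_def Kg_def[abs_def] is_quadratic_form_def by blast
  let ?H = "fHg h" and ?F3 = "f3g K A1 A2" and ?F4 = "f4g P Q R S T B1 B2 B3"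
  have pH: "pf ?H" by (rule pf_fHg)
  have p3: "pf ?F3" by (rule pf_f3g[OF Kq A1_lin])
  have p4: "pf ?F4" by (rule pf_f4g[OF P_form Q_cubic R_quad S_herm T_form B1_quad B2_lin B3_lin])
  have pHF3: "pf (\<lambda>q. ?H q + ?F3 q)" using pH p3 by (rule pf_add)
  have pfp: "pf (\<lambda>q. ?H q + ?F3 q + ?F4 q)" using pHF3 p4 by (rule pf_add)
  have CI: "C_inf_on U Rc" using Rem_smooth unfolding Rc_def .
  obtain C0 where C0: "\<forall>p\<in>U. norm (Rc p) \<le> C0 * norm p ^ 5" using Rem_small unfolding Rc_def by auto
  have dec: "cHess f q j k = dZ j (dZb k ?H) q + dZ j (dZb k ?F3) q + dZ j (dZb k ?F4) q + dZ j (dZb k Rc) q"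
    if "q \<in> U" for q j k
  proof -
    have "cHess f q j k = dZ j (dZb k (\<lambda>q. ?H q + ?F3 q + ?F4 q)) q + dZ j (dZb k Rc) q"
      by (rule cHess_decomp[OF _ pfp CI U_open that]) (simp add: f_eq Rc_def K_def)
    also have "dZ j (dZb k (\<lambda>q. ?H q + ?F3 q + ?F4 q)) q = dZ j (dZb k (\<lambda>q. ?H q + ?F3 q)) q + dZ j (dZb k ?F4) q"
      by (rule Hess_add_pf[OF pHF3 p4])
    also have "dZ j (dZb k (\<lambda>q. ?H q + ?F3 q)) q = dZ j (dZb k ?H) q + dZ j (dZb k ?F3) q"
      by (rule Hess_add_pf[OF pH p3])
    finally show ?thesis .
  qed
  have h2: "hom (Suc (Suc 0)) ?H" using hom_fHg by (simp add: numeral_2_eq_2)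
  have h3: "hom (Suc (Suc 1)) ?F3" using hom_f3g[OF Kq A1_lin] by (simp add: numeral_3_eq_3)
  have h4: "hom (Suc (Suc 2)) ?F4" using hom_f4g[OF P_form Q_cubic R_quad S_herm T_form B1_quad B2_lin B3_lin]
    by (simp add: eval_nat_numeral)
  have homs: "dZ j (dZb k ?H) (t *\<^sub>R q) = dZ j (dZb k ?H) q"
    "dZ j (dZb k ?F3) (t *\<^sub>R q) = of_real t * dZ j (dZb k ?F3) q"
    "dZ j (dZb k ?F4) (t *\<^sub>R q) = of_real t ^ 2 * dZ j (dZb k ?F4) q" if "t \<noteq> 0" for t q j k
    using Hess_hom[OF pH h2 that] Hess_hom[OF p3 h3 that] Hess_hom[OF p4 h4 that] by simp_all
  have ent: "\<exists>D. eventually (\<lambda>t. cHess f (t *\<^sub>R p0) j k = dZ j (dZb k ?H) p0 + of_real t * dZ j (dZb k ?F3) p0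
        + of_real t ^ 2 * dZ j (dZb k ?F4) p0 + dZ j (dZb k Rc) (t *\<^sub>R p0)) (at 0)
      \<and> eventually (\<lambda>t. norm (dZ j (dZb k Rc) (t *\<^sub>R p0)) \<le> D * \<bar>t\<bar> ^ 3) (at 0)" for p0 j k
  proof -
    obtain C r where Cr: "0 < r" "cball 0 r \<subseteq> U" "\<forall>q\<in>cball 0 r. norm (dZ j (dZb k Rc) q) \<le> C * norm q ^ 3"
      using HessR_bound[OF CI U_open U_0 C0] by blast
    have evr: "eventually (\<lambda>t::real. t \<noteq> 0 \<and> t *\<^sub>R p0 \<in> ball 0 r) (at 0)" by (rule ev_ball[OF Cr(1)])
    show ?thesis
    proof (intro exI conjI)
      show "eventually (\<lambda>t. cHess f (t *\<^sub>R p0) j k = dZ j (dZb k ?H) p0 + of_real t * dZ j (dZb k ?F3) p0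
        + of_real t ^ 2 * dZ j (dZb k ?F4) p0 + dZ j (dZb k Rc) (t *\<^sub>R p0)) (at 0)"
        using evr
      proof eventually_elim
        case (elim t)
        then have "t *\<^sub>R p0 \<in> U" using Cr(2) by auto
        then show ?case using dec homs elim by simp
      qed
      show "eventually (\<lambda>t. norm (dZ j (dZb k Rc) (t *\<^sub>R p0)) \<le> (C * norm p0 ^ 3) * \<bar>t\<bar> ^ 3) (at 0)"
        using evr
      proof eventually_elim
        case (elim t)
        then have "t *\<^sub>R p0 \<in> cball 0 r" by auto
        then have "norm (dZ j (dZb k Rc) (t *\<^sub>R p0)) \<le> C * norm (t *\<^sub>R p0) ^ 3" using Cr(3) by blast
        then show ?case by (simp add: power_mult_distrib mult_ac)
      qed
    qed
  qed
  have LIM: "((\<lambda>t. cHess f (t *\<^sub>R p0) j k) \<longlongrightarrow> dZ j (dZb k ?H) p0) (at 0)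
     \<and> (dZ j (dZb k ?H) p0 = 0 \<longrightarrow> ((\<lambda>t. cHess f (t *\<^sub>R p0) j k / of_real t) \<longlongrightarrow> dZ j (dZb k ?F3) p0) (at 0))
     \<and> (dZ j (dZb k ?H) p0 = 0 \<longrightarrow> dZ j (dZb k ?F3) p0 = 0 \<longrightarrow>
          ((\<lambda>t. cHess f (t *\<^sub>R p0) j k / of_real t ^ 2) \<longlongrightarrow> dZ j (dZb k ?F4) p0) (at 0))" for p0 j k
  proof -
    obtain D where D: "eventually (\<lambda>t. cHess f (t *\<^sub>R p0) j k = dZ j (dZb k ?H) p0 + of_real t * dZ j (dZb k ?F3) p0
        + of_real t ^ 2 * dZ j (dZb k ?F4) p0 + dZ j (dZb k Rc) (t *\<^sub>R p0)) (at 0)"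
      "eventually (\<lambda>t. norm (dZ j (dZb k Rc) (t *\<^sub>R p0)) \<le> D * \<bar>t\<bar> ^ 3) (at 0)"
      using ent by blast
    show ?thesis using lim_entry[OF D] by blast
  qed
  have evdet: "eventually (\<lambda>t. det3 (\<lambda>j k. cHess f (t *\<^sub>R p0) j k) = 0) (at 0)" for p0
  proof -
    obtain r where r: "r > 0" "ball 0 r \<subseteq> U" using U_open U_0 open_contains_ball by blast
    show ?thesis using ev_ball[OF r(1), of p0]
    proof eventually_elim
      case (elim t)
      then have "t *\<^sub>R p0 \<in> U" using r by auto
      then show ?case using levi_degenerate unfolding levi_det_def by auto
    qed
  qed
  note HH = HfH[of h]
  have S1: "dZ 2 (dZb 2 ?F3) p0 = 0" for p0
  proof -
    have "(h 0 0 * h 1 1 - h 0 1 * h 1 0) * dZ 2 (dZb 2 ?F3) p0 = 0"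
    proof (rule stage1[where X = "\<lambda>j k t. cHess f (t *\<^sub>R p0) j k", OF evdet])
      show "((\<lambda>t. cHess f (t *\<^sub>R p0) 0 0) \<longlongrightarrow> h 0 0) (at 0)" using LIM[of p0 0 0] HH by simp
      show "((\<lambda>t. cHess f (t *\<^sub>R p0) 0 1) \<longlongrightarrow> h 0 1) (at 0)" using LIM[of p0 0 1] HH by simp
      show "((\<lambda>t. cHess f (t *\<^sub>R p0) 1 0) \<longlongrightarrow> h 1 0) (at 0)" using LIM[of p0 1 0] HH by simp
      show "((\<lambda>t. cHess f (t *\<^sub>R p0) 1 1) \<longlongrightarrow> h 1 1) (at 0)" using LIM[of p0 1 1] HH by simp
      show "((\<lambda>t. cHess f (t *\<^sub>R p0) 1 2) \<longlongrightarrow> 0) (at 0)" using LIM[of p0 1 2] HH by simp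
      show "((\<lambda>t. cHess f (t *\<^sub>R p0) 2 1) \<longlongrightarrow> 0) (at 0)" using LIM[of p0 2 1] HH by simp
      show "((\<lambda>t. cHess f (t *\<^sub>R p0) 2 0) \<longlongrightarrow> 0) (at 0)" using LIM[of p0 2 0] HH by simp
      show "((\<lambda>t. cHess f (t *\<^sub>R p0) 2 2 / of_real t) \<longlongrightarrow> dZ 2 (dZb 2 ?F3) p0) (at 0)" using LIM[of p0 2 2] HH by simp
      show "((\<lambda>t. cHess f (t *\<^sub>R p0) 2 1 / of_real t) \<longlongrightarrow> dZ 2 (dZb 1 ?F3) p0) (at 0)" using LIM[of p0 2 1] HH by simp
      show "((\<lambda>t. cHess f (t *\<^sub>R p0) 2 0 / of_real t) \<longlongrightarrow> dZ 2 (dZb 0 ?F3) p0) (at 0)" using LIM[of p0 2 0] HH by simp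
      show "((\<lambda>t. cHess f (t *\<^sub>R p0) 0 2 / of_real t) \<longlongrightarrow> dZ 0 (dZb 2 ?F3) p0) (at 0)" using LIM[of p0 0 2] HH by simp
    qed
    then show ?thesis using det by simp
  qed
  have E1: "\<forall>x y w. A1 x y + cnj (A1 x y) + 2 * A2 * w + 2 * cnj A2 * cnj w = 0"
  proof (intro allI)
    fix x y w :: complex
    show "A1 x y + cnj (A1 x y) + 2 * A2 * w + 2 * cnj A2 * cnj w = 0"
      using S1[of "(x, y, w)"] unfolding Hf3_22 by simp
  qed
  obtain A10: "\<forall>x y. A1 x y = 0" and A20: "A2 = 0" using alg1[OF A1_lin E1] by blast
  have F3eq: "?F3 = f3g (Kg ka kb kc) (\<lambda>x y. 0) 0"
  proof -
    have "A1 = (\<lambda>x y. 0)" using A10 by (intro ext) simp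
    then show ?thesis using A20 K_def by simp
  qed
  have F3_22: "dZ 2 (dZb 2 ?F3) p0 = 0" for p0 unfolding F3eq Hf3_22 by simp
  have E2: "\<forall>x y w. (h 0 0 * h 1 1 - h 0 1 * h 1 0) * (S x y + B1 x y + cnj (B1 x y) + 2 * B2 x y * w
      + 2 * cnj (B2 x y) * cnj w + 2 * B3 x y * cnj w + 2 * cnj (B3 x y) * w) = RHf h ka kb kc x y"
  proof (intro allI)
    fix x y w :: complex
    let ?p0 = "(x, y, w)"
    have "h 0 0 * (h 1 1 * dZ 2 (dZb 2 ?F4) ?p0 - dZ 1 (dZb 2 ?F3) ?p0 * dZ 2 (dZb 1 ?F3) ?p0)
        - h 0 1 * (h 1 0 * dZ 2 (dZb 2 ?F4) ?p0 - dZ 1 (dZb 2 ?F3) ?p0 * dZ 2 (dZb 0 ?F3) ?p0)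
        + dZ 0 (dZb 2 ?F3) ?p0 * (h 1 0 * dZ 2 (dZb 1 ?F3) ?p0 - h 1 1 * dZ 2 (dZb 0 ?F3) ?p0) = 0"
    proof (rule stage2[where X = "\<lambda>j k t. cHess f (t *\<^sub>R ?p0) j k", OF evdet])
      show "((\<lambda>t. cHess f (t *\<^sub>R ?p0) 0 0) \<longlongrightarrow> h 0 0) (at 0)" using LIM[of ?p0 0 0] HH by simp
      show "((\<lambda>t. cHess f (t *\<^sub>R ?p0) 0 1) \<longlongrightarrow> h 0 1) (at 0)" using LIM[of ?p0 0 1] HH by simp
      show "((\<lambda>t. cHess f (t *\<^sub>R ?p0) 1 0) \<longlongrightarrow> h 1 0) (at 0)" using LIM[of ?p0 1 0] HH by simp
      show "((\<lambda>t. cHess f (t *\<^sub>R ?p0) 1 1) \<longlongrightarrow> h 1 1) (at 0)" using LIM[of ?p0 1 1] HH by simp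
      show "((\<lambda>t. cHess f (t *\<^sub>R ?p0) 2 2 / of_real t ^ 2) \<longlongrightarrow> dZ 2 (dZb 2 ?F4) ?p0) (at 0)"
        using LIM[of ?p0 2 2] HH F3_22 by simp
      show "((\<lambda>t. cHess f (t *\<^sub>R ?p0) 1 2 / of_real t) \<longlongrightarrow> dZ 1 (dZb 2 ?F3) ?p0) (at 0)" using LIM[of ?p0 1 2] HH by simp
      show "((\<lambda>t. cHess f (t *\<^sub>R ?p0) 0 2 / of_real t) \<longlongrightarrow> dZ 0 (dZb 2 ?F3) ?p0) (at 0)" using LIM[of ?p0 0 2] HH by simp
      show "((\<lambda>t. cHess f (t *\<^sub>R ?p0) 2 1 / of_real t) \<longlongrightarrow> dZ 2 (dZb 1 ?F3) ?p0) (at 0)" using LIM[of ?p0 2 1] HH by simp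
      show "((\<lambda>t. cHess f (t *\<^sub>R ?p0) 2 0 / of_real t) \<longlongrightarrow> dZ 2 (dZb 0 ?F3) ?p0) (at 0)" using LIM[of ?p0 2 0] HH by simp
    qed
    from stage2_alg[OF this]
    show "(h 0 0 * h 1 1 - h 0 1 * h 1 0) * (S x y + B1 x y + cnj (B1 x y) + 2 * B2 x y * w
      + 2 * cnj (B2 x y) * cnj w + 2 * B3 x y * cnj w + 2 * cnj (B3 x y) * w) = RHf h ka kb kc x y"
      unfolding F3eq Hf3_mixed Hf4_22 RHf_def by (simp add: algebra_simps)
  qed
  have "(\<forall>x y. B1 x y = 0) \<and> (\<forall>x y. B2 x y = 0) \<and> (\<forall>x y. B3 x y = 0)
      \<and> (\<forall>x y. (h 0 0 * h 1 1 - h 0 1 * h 1 0) * S x y = RHf h ka kb kc x y)"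
    by (rule alg2[OF B1_quad B2_lin B3_lin S_herm det RHf_i E2])
  then show ?thesis using A10 A20 by simp
qed

definition hN :: "nat \<Rightarrow> nat \<Rightarrow> nat \<Rightarrow> complex" where
  "hN n i j = (if n \<le> 3 then (if i = j then 1 else 0)
     else if n \<le> 6 then (if i = j then (if i = 0 then 1 else -1) else 0)
     else (if i = j then 0 else 1))"

definition kaN :: "nat \<Rightarrow> real \<Rightarrow> complex" where
  "kaN n k = (if n \<le> 6 then of_real k else 1)"
definition kcN :: "nat \<Rightarrow> real \<Rightarrow> complex \<Rightarrow> complex" where
  "kcN n k m = (if n \<in> {1,4,7,8} then m else if n \<in> {2,5} then of_real k else 0)"

lemma cn2: "complex_of_real ((cmod z)^2) = z * cnj z" by (rule complex_norm_square)

lemma cn2': "(complex_of_real (cmod z))^2 = z * cnj z" using cn2 by simp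
lemma re2m: "complex_of_real (2 * Re (x * cnj y)) = x * cnj y + y * cnj x"
  unfolding re2c by (simp add: mult.commute)

lemma case_herm: assumes "n \<in> {1..9}" shows "complex_of_real (nf_herm n (fst q) (fst (snd q))) = fHg (hN n) q"
proof -
  have n: "n = 1 \<or> n = 2 \<or> n = 3 \<or> n = 4 \<or> n = 5 \<or> n = 6 \<or> n = 7 \<or> n = 8 \<or> n = 9" using assms by auto
  show ?thesis
  proof (cases "n \<ge> 7")
    case True
    have e: "nf_herm n (fst q) (fst (snd q)) = 2 * Re (fst q * cnj (fst (snd q)))" using True n by (auto simp: nf_herm_def)
    have "fHg (hN n) q = fst q * cnj (fst (snd q)) + fst (snd q) * cnj (fst q)" using True n by (auto simp: fHg_def hN_def)
    then show ?thesis by (simp only: e re2m)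
  next
    case False
    then show ?thesis using n by (elim disjE) (simp_all add: nf_herm_def fHg_def hN_def cn2')
  qed
qed

lemma case_K: "n \<in> {1..9} \<Longrightarrow> nf_K n k m = Kg (kaN n k) 0 (kcN n k m)"
  unfolding nf_K_def Kg_def[abs_def] kaN_def kcN_def
  by (rule ext, rule ext) (auto simp: algebra_simps)

lemma case_det: "n \<in> {1..9} \<Longrightarrow> hN n 0 0 * hN n 1 1 - hN n 0 1 * hN n 1 0 = (if n \<le> 3 then 1 else -1)"
  unfolding hN_def by auto

lemma case_S: assumes "n \<in> {1..9}" "nf_params n k m"
  shows "RHf (hN n) (kaN n k) 0 (kcN n k m) x y / (if n \<le> 3 then 1 else -1) = nf_S n k m x y"
proof -
  have n: "n = 1 \<or> n = 2 \<or> n = 3 \<or> n = 4 \<or> n = 5 \<or> n = 6 \<or> n = 7 \<or> n = 8 \<or> n = 9" using assms(1) by auto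
  have mr: "n \<in> {1,4,8} \<Longrightarrow> cnj m = m" using assms(2) unfolding nf_params_def by (auto simp: Reals_cnj_iff)
  show ?thesis using n
    unfolding nf_S_def
    by (simp only: of_real_add of_real_diff of_real_mult cn2, elim disjE; simp add: RHf_def hN_def kaN_def kcN_def mr power2_eq_square algebra_simps)
qed

theorem lemma8:
  fixes n :: nat and k :: real and m :: complex
    and A1 B1 B2 B3 R P Q S T :: "complex \<Rightarrow> complex \<Rightarrow> complex"
    and A2 :: complex
    and f Rem :: "pt \<Rightarrow> real" and U :: "pt set"
  assumes case_n: "n \<in> {1..9}" and params: "nf_params n k m"
    and A1_lin: "is_linear_form A1"
    and B1_quad: "is_quadratic_form B1" and R_quad: "is_quadratic_form R"
    and B2_lin: "is_linear_form B2" and B3_lin: "is_linear_form B3"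
    and P_form: "is_bideg21 P" and Q_cubic: "is_cubic_form Q"
    and S_herm: "is_hermitian_form S" and T_form: "is_bideg22 T"
    and f_eq: "\<And>z1 z2 \<zeta>. complex_of_real (f (z1, z2, \<zeta>)) =
        complex_of_real (nf_herm n z1 z2)
      + complex_of_real (2 * Re (nf_K n k m z1 z2 * cnj \<zeta> + A1 z1 z2 * of_real ((cmod \<zeta>)^2)
                                  + A2 * \<zeta>^2 * cnj \<zeta>))
      + complex_of_real (2 * Re ((P z1 z2 + Q z1 z2) * cnj \<zeta> + R z1 z2 * (cnj \<zeta>)^2))
      + S z1 z2 * of_real ((cmod \<zeta>)^2) + T z1 z2
      + complex_of_real (2 * Re (B1 z1 z2 * of_real ((cmod \<zeta>)^2) + B2 z1 z2 * \<zeta>^2 * cnj \<zeta>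
                                  + B3 z1 z2 * \<zeta> * (cnj \<zeta>)^2))
      + complex_of_real (Rem (z1, z2, \<zeta>))"
    and U_open: "open U" and U_0: "0 \<in> U"
    and Rem_smooth: "C_inf_on U (\<lambda>p. complex_of_real (Rem p))"
    and Rem_small: "\<exists>C. \<forall>p\<in>U. \<bar>Rem p\<bar> \<le> C * norm p ^ 5"
    and levi_degenerate: "\<forall>p\<in>U. levi_det f p = 0"
  shows "(\<forall>z1 z2. A1 z1 z2 = 0) \<and> A2 = 0 \<and> (\<forall>z1 z2. B1 z1 z2 = 0)
       \<and> (\<forall>z1 z2. B2 z1 z2 = 0) \<and> (\<forall>z1 z2. B3 z1 z2 = 0)
       \<and> (\<forall>z1 z2. S z1 z2 = nf_S n k m z1 z2)"
proof -
  have feq': "complex_of_real (f q) = fHg (hN n) q + f3g (Kg (kaN n k) 0 (kcN n k m)) A1 A2 q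
        + f4g P Q R S T B1 B2 B3 q + complex_of_real (Rem q)" for q
  proof -
    obtain z1 z2 \<zeta> where q: "q = (z1, z2, \<zeta>)" by (cases q) auto
    have h: "complex_of_real (nf_herm n z1 z2) = fHg (hN n) q" using case_herm[OF case_n, of q] q by simp
    show ?thesis unfolding q f_eq f3g_def f4g_def case_K[OF case_n, symmetric] h[unfolded q] by simp
  qed
  have det: "hN n 0 0 * hN n 1 1 - hN n 0 1 * hN n 1 0 \<noteq> 0" using case_det[OF case_n] by simp
  note C = core[OF A1_lin B1_quad R_quad B2_lin B3_lin P_form Q_cubic S_herm T_form feq' det
      U_open U_0 Rem_smooth Rem_small levi_degenerate]
  have "S x y = nf_S n k m x y" for x y
  proof -
    have "(hN n 0 0 * hN n 1 1 - hN n 0 1 * hN n 1 0) * S x y = RHf (hN n) (kaN n k) 0 (kcN n k m) x y"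
      using C by blast
    then have eq: "(if n \<le> 3 then 1 else -1) * S x y = RHf (hN n) (kaN n k) 0 (kcN n k m) x y"
      unfolding case_det[OF case_n] .
    have "S x y = RHf (hN n) (kaN n k) 0 (kcN n k m) x y / (if n \<le> 3 then 1 else -1)"
    proof (cases "n \<le> 3")
      case True then show ?thesis using eq by simp
    next
      case False
      then have "- S x y = RHf (hN n) (kaN n k) 0 (kcN n k m) x y" using eq by simp
      then have "S x y = - RHf (hN n) (kaN n k) 0 (kcN n k m) x y" by (metis minus_minus)
      then show ?thesis using False by simp
    qed
    then show ?thesis using case_S[OF case_n params] by simp
  qed
  then show ?thesis using C by blast
qed

end
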